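(* Let $V(z)=\sum_{j=1}^{2d}v_jz^j$ with $v_{2d}>0$, $\tilde v_2=Nv_2$, and $Z_N=\int_{\mathbb R^N}\prod_{1\le j<k\le N}(z_j-z_k)^2e^{-N\sum_jV(z_j)}dz_1\cdots dz_N$. Then $$\frac{\partial^2\ln Z_N}{\partial\tilde v_2^2}=\gamma_N^2\big(\gamma_{N-1}^2+\gamma_{N+1}^2+\beta_N^2+2\beta_N\beta_{N-1}+\beta_{N-1}^2\big).$$
   Context: $\gamma_n,\beta_n$ are the recurrence coefficients of the monic orthogonal polynomials $P_n$ with respect to $e^{-NV(z)}$ on $\mathbb R$: $zP_n=P_{n+1}+\beta_nP_n+\gamma_n^2P_{n-1}$, $\gamma_n=\sqrt{h_n/h_{n-1}}>0$ with $h_n=\int P_n^2e^{-NV}dz$, $\gamma_0=0$. *)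

theory Defs
  imports "HOL-Probability.Probability" "HOL-Computational_Algebra.Polynomial"
begin

definition Vpot :: "nat \<Rightarrow> (nat \<Rightarrow> real) \<Rightarrow> real \<Rightarrow> real" where
  "Vpot d v z = (\<Sum>j=1..2*d. v j * z ^ j)"

definition opweight :: "nat \<Rightarrow> nat \<Rightarrow> (nat \<Rightarrow> real) \<Rightarrow> real \<Rightarrow> real" where
  "opweight d N v x = exp (- real N * Vpot d v x)"

definition is_monic_OP :: "(real \<Rightarrow> real) \<Rightarrow> nat \<Rightarrow> real poly \<Rightarrow> bool" where
  "is_monic_OP w n p \<longleftrightarrow> degree p = n \<and> lead_coeff p = 1 \<and>
     (\<forall>k<n. integrable lborel (\<lambda>x. poly p x * x ^ k * w x) \<and>
            integral\<^sup>L lborel (\<lambda>x. poly p x * x ^ k * w x) = 0)"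

definition mOP :: "(real \<Rightarrow> real) \<Rightarrow> nat \<Rightarrow> real poly" where
  "mOP w n = (THE p. is_monic_OP w n p)"

definition hnorm :: "(real \<Rightarrow> real) \<Rightarrow> nat \<Rightarrow> real" where
  "hnorm w n = integral\<^sup>L lborel (\<lambda>x. (poly (mOP w n) x)\<^sup>2 * w x)"

definition rc_gamma :: "(real \<Rightarrow> real) \<Rightarrow> nat \<Rightarrow> real" where
  "rc_gamma w n = (if n = 0 then 0 else sqrt (hnorm w n / hnorm w (n - 1)))"

definition rc_beta :: "(real \<Rightarrow> real) \<Rightarrow> nat \<Rightarrow> real" where
  "rc_beta w n = (THE b. \<exists>c. [:0, 1:] * mOP w n =
      mOP w (Suc n) + smult b (mOP w n) + smult c (if n = 0 then 0 else mOP w (n - 1)))"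

definition partition_Z :: "nat \<Rightarrow> nat \<Rightarrow> (nat \<Rightarrow> real) \<Rightarrow> real" where
  "partition_Z d N v = integral\<^sup>L (PiM {..<N} (\<lambda>_. lborel))
     (\<lambda>z. (\<Prod>j<N. \<Prod>k\<in>{Suc j..<N}. (z j - z k)\<^sup>2) *
          exp (- real N * (\<Sum>j<N. Vpot d v (z j))))"

end

theory Submission
  imports Defs "Jordan_Normal_Form.Determinant"
begin


fun OPr :: "(real poly \<Rightarrow> real poly \<Rightarrow> real) \<Rightarrow> nat \<Rightarrow> real poly" where
  "OPr B 0 = 1"
| "OPr B (Suc 0) = pCons 0 1 - Polynomial.smult (B (pCons 0 1) 1 / B 1 1) 1"
| "OPr B (Suc (Suc n)) = pCons 0 (OPr B (Suc n))
     - Polynomial.smult (B (pCons 0 (OPr B (Suc n))) (OPr B (Suc n)) / B (OPr B (Suc n)) (OPr B (Suc n))) (OPr B (Suc n))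
     - Polynomial.smult (B (OPr B (Suc n)) (OPr B (Suc n)) / B (OPr B n) (OPr B n)) (OPr B n)"

definition hB :: "(real poly \<Rightarrow> real poly \<Rightarrow> real) \<Rightarrow> nat \<Rightarrow> real" where
  "hB B n = B (OPr B n) (OPr B n)"
definition bB :: "(real poly \<Rightarrow> real poly \<Rightarrow> real) \<Rightarrow> nat \<Rightarrow> real" where
  "bB B n = B (pCons 0 (OPr B n)) (OPr B n) / hB B n"
definition cB :: "(real poly \<Rightarrow> real poly \<Rightarrow> real) \<Rightarrow> nat \<Rightarrow> real" where
  "cB B n = (if n = 0 then 0 else hB B n / hB B (n - 1))"

lemma OPr_Suc: "OPr B (Suc n) = pCons 0 (OPr B n) - Polynomial.smult (bB B n) (OPr B n)
   - Polynomial.smult (cB B n) (if n = 0 then 0 else OPr B (n - 1))"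
  by (cases n) (simp_all add: bB_def cB_def hB_def)

lemma OPr_coeff: "coeff (OPr B n) n = 1 \<and> (\<forall>a>n. coeff (OPr B n) a = 0)"
proof (induction n rule: less_induct)
  case (less n)
  show ?case
  proof (cases n)
    case 0 then show ?thesis by auto
  next
    case (Suc m)
    have IH1: "coeff (OPr B m) m = 1" "\<forall>a>m. coeff (OPr B m) a = 0" using less Suc by auto
    have IH2: "\<forall>a\<ge>m. coeff (if m = 0 then 0 else OPr B (m - 1)) a = 0"
    proof (cases m)
      case (Suc j) then show ?thesis using less[of j] \<open>n = Suc m\<close> by auto
    qed simp
    show ?thesis unfolding Suc OPr_Suc
      using IH1 IH2 by (auto simp: coeff_pCons split: nat.splits)
  qed
qed

lemma OPr_monic: "coeff (OPr B n) n = 1" using OPr_coeff by blast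
lemma OPr_high: "a > n \<Longrightarrow> coeff (OPr B n) a = 0" using OPr_coeff by blast
lemma OPr_degree: "degree (OPr B n) = n"
proof (rule antisym)
  show "degree (OPr B n) \<le> n" using OPr_high by (meson degree_le not_le_imp_less)
  show "n \<le> degree (OPr B n)" using OPr_monic by (simp add: le_degree)
qed
lemma OPr_nz: "OPr B n \<noteq> 0" using OPr_monic[of B n] by auto

definition deglt :: "real poly \<Rightarrow> nat \<Rightarrow> bool" where
  "deglt p m \<longleftrightarrow> (\<forall>a\<ge>m. coeff p a = 0)"

definition X2 :: "real poly \<Rightarrow> real poly" where "X2 p = pCons 0 (pCons 0 p)"

locale opform =
  fixes B :: "real poly \<Rightarrow> real poly \<Rightarrow> real"
  assumes B_add: "B (p + q) r = B p r + B q r"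
    and B_smult: "B (Polynomial.smult a p) r = a * B p r"
    and B_sym: "B p q = B q p"
    and B_pos: "p \<noteq> 0 \<Longrightarrow> B p p > 0"
    and B_shift: "B (pCons 0 p) q = B p (pCons 0 q)"
begin

abbreviation "Q \<equiv> OPr B"
abbreviation "h \<equiv> hB B"
abbreviation "b \<equiv> bB B"
abbreviation "c \<equiv> cB B"

lemma B_zero[simp]: "B 0 r = 0"
  using B_smult[of 0 0 r] by simp
lemma B_zero2[simp]: "B r 0 = 0"
  using B_zero B_sym by metis
lemma B_add2: "B r (p + q) = B r p + B r q"
  using B_add B_sym by metis
lemma B_smult2: "B r (Polynomial.smult a p) = a * B r p"
  using B_smult B_sym by metis
lemma B_minus: "B (- p) r = - B p r"
  using B_smult[of "-1" p r] by simp
lemma B_diff: "B (p - q) r = B p r - B q r"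
  using B_add[of p "-q" r] B_minus by simp
lemma B_diff2: "B r (p - q) = B r p - B r q"
  using B_diff B_sym by metis
lemma B_sum: "B (\<Sum>k\<in>S. f k) r = (\<Sum>k\<in>S. B (f k) r)"
  by (induction S rule: infinite_finite_induct) (auto simp: B_add)

lemma h_pos: "h n > 0"
  unfolding hB_def using B_pos OPr_nz by blast


lemma span: "deglt p m \<Longrightarrow> \<exists>cc. p = (\<Sum>k<m. Polynomial.smult (cc k) (Q k))"
proof (induction m arbitrary: p)
  case 0
  then have "p = 0" unfolding deglt_def by (simp add: poly_eq_iff)
  then show ?case by simp
next
  case (Suc m)
  define p' where "p' = p - Polynomial.smult (coeff p m) (Q m)"
  have "deglt p' m" unfolding deglt_def p'_def
  proof (intro allI impI)
    fix a assume "m \<le> a"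
    show "coeff (p - Polynomial.smult (coeff p m) (Q m)) a = 0"
    proof (cases "a = m")
      case True then show ?thesis by (simp add: OPr_monic)
    next
      case False then have "a > m" using \<open>m \<le> a\<close> by simp
      then show ?thesis using Suc.prems OPr_high[of m a] unfolding deglt_def by simp
    qed
  qed
  then obtain cc where cc: "p' = (\<Sum>k<m. Polynomial.smult (cc k) (Q k))" using Suc.IH by blast
  have "p = (\<Sum>k<m. Polynomial.smult ((cc(m := coeff p m)) k) (Q k)) + Polynomial.smult ((cc(m := coeff p m)) m) (Q m)"
    using cc unfolding p'_def by (simp add: algebra_simps)
  also have "\<dots> = (\<Sum>k<Suc m. Polynomial.smult ((cc(m := coeff p m)) k) (Q k))" by simp
  finally show ?case by blast
qed

lemma deglt_mono: "deglt p m \<Longrightarrow> m \<le> m' \<Longrightarrow> deglt p m'"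
  unfolding deglt_def by auto

lemma deglt_Q: "deglt (Q k) m \<longleftrightarrow> k < m"
  unfolding deglt_def using OPr_high[of k] OPr_monic[of B k]
  by (metis linorder_not_le order.strict_trans1 zero_neq_one)

lemma orth_from_span:
  assumes "\<And>k. k < n \<Longrightarrow> B (Q n) (Q k) = 0" and "deglt p n"
  shows "B p (Q n) = 0"
proof -
  obtain cc where cc: "p = (\<Sum>k<n. Polynomial.smult (cc k) (Q k))" using span assms(2) by blast
  have "B p (Q n) = (\<Sum>k<n. cc k * B (Q k) (Q n))" by (subst cc) (simp add: B_sum B_smult)
  also have "\<dots> = 0" using assms(1) B_sym by (intro sum.neutral) (metis lessThan_iff mult_zero_right)
  finally show ?thesis .
qed

lemma deglt_pCons: "deglt p m \<Longrightarrow> deglt (pCons 0 p) (Suc m)"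
  unfolding deglt_def by (auto simp: coeff_pCons split: nat.splits)

lemma orth: "k < n \<Longrightarrow> B (Q n) (Q k) = 0"
proof (induction n arbitrary: k rule: less_induct)
  case (less n)
  then obtain m where n: "n = Suc m" by (cases n) auto
  have low: "B p (Q j) = 0" if "j \<le> m" "deglt p j" for p j
    using orth_from_span[of j p] less.IH that n by auto
  have r: "Q n = pCons 0 (Q m) - Polynomial.smult (b m) (Q m) - Polynomial.smult (c m) (if m = 0 then 0 else Q (m - 1))"
    using OPr_Suc n by simp
  have orth_m: "B (Q m) (Q (m - 1)) = 0" if "m > 0"
    using less.IH[of m "m - 1"] n that by simp
  consider "k = m" | "k + 1 = m" | "k + 1 < m" using less.prems n by linarith
  then show ?case
  proof cases
    case 1
    have "B (pCons 0 (Q m)) (Q m) = b m * h m" unfolding bB_def using h_pos[of m] by simp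
    moreover have "m > 0 \<Longrightarrow> B (Q (m - 1)) (Q m) = 0" using orth_m B_sym by metis
    ultimately show ?thesis using 1 unfolding r
      by (auto simp: B_diff B_smult hB_def)
  next
    case 2
    then have m0: "m > 0" and k: "k = m - 1" by auto
    have "B (pCons 0 (Q m)) (Q k) = B (Q m) (pCons 0 (Q k))" by (rule B_shift)
    also have "pCons 0 (Q k) = Q m + (pCons 0 (Q k) - Q m)" by simp
    also have "B (Q m) (Q m + (pCons 0 (Q k) - Q m)) = h m + B (pCons 0 (Q k) - Q m) (Q m)"
      using B_add2[of "Q m" "Q m" "pCons 0 (Q k) - Q m"] B_sym[of "Q m" "pCons 0 (Q k) - Q m"]
      unfolding hB_def by simp
    also have "B (pCons 0 (Q k) - Q m) (Q m) = 0"
    proof (rule low)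
      show "deglt (pCons 0 (Q k) - Q m) m"
        unfolding deglt_def
      proof (intro allI impI)
        fix a assume "m \<le> a"
        show "coeff (pCons 0 (Q k) - Q m) a = 0"
          using OPr_monic[of B k] OPr_monic[of B m] OPr_high[of k] OPr_high[of m a] \<open>m \<le> a\<close> 2
          by (cases "a = m") (auto simp: coeff_pCons split: nat.splits)
      qed
    qed simp
    finally have e1: "B (pCons 0 (Q m)) (Q k) = h m" by simp
    have "c m * h (m - 1) = h m" unfolding cB_def using m0 h_pos[of "m - 1"] by simp
    moreover have "B (Q m) (Q k) = 0" using less.IH[of m k] n 2 by simp
    ultimately show ?thesis unfolding r using m0 e1 k by (simp add: B_diff B_smult hB_def)
  next
    case 3
    have "B (pCons 0 (Q m)) (Q k) = B (Q m) (pCons 0 (Q k))" by (rule B_shift)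
    also have "\<dots> = 0" using low[of m "pCons 0 (Q k)"] deglt_pCons[of "Q k" "Suc k"] 3
      deglt_Q[of k "Suc k"] B_sym deglt_mono[of "pCons 0 (Q k)" "Suc (Suc k)" m]
      by (metis Suc_eq_plus1 Suc_leI lessI order_refl)
    finally have e1: "B (pCons 0 (Q m)) (Q k) = 0" .
    have "B (Q m) (Q k) = 0" using less.IH[of m k] n 3 by simp
    moreover have "m > 0 \<Longrightarrow> B (Q (m - 1)) (Q k) = 0" using less.IH[of "m - 1" k] n 3 by simp
    ultimately show ?thesis unfolding r using e1 3 by (simp add: B_diff B_smult)
  qed
qed

lemma orth_low: "deglt p n \<Longrightarrow> B p (Q n) = 0"
  using orth_from_span orth by blast

lemma orth_low2: "deglt p n \<Longrightarrow> B (Q n) p = 0"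
  using orth_low B_sym by metis

lemma expansion:
  assumes "deglt p m"
  shows "p = (\<Sum>k<m. Polynomial.smult (B p (Q k) / h k) (Q k))"
proof -
  obtain cc where cc: "p = (\<Sum>k<m. Polynomial.smult (cc k) (Q k))" using span assms by blast
  have "B p (Q j) = cc j * h j" if "j < m" for j
  proof -
    have "B p (Q j) = (\<Sum>k<m. cc k * B (Q k) (Q j))" by (subst cc) (simp add: B_sum B_smult)
    also have "\<dots> = (\<Sum>k\<in>{j}. cc k * B (Q k) (Q j))"
    proof (rule sum.mono_neutral_right)
      show "\<forall>i\<in>{..<m} - {j}. cc i * B (Q i) (Q j) = 0"
        using orth B_sym by (metis DiffE insertI1 linorder_neqE_nat mult_eq_0_iff)
    qed (use that in auto)
    finally show ?thesis by (simp add: hB_def)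
  qed
  then have cck: "cc k = B p (Q k) / h k" if "k < m" for k
    using h_pos[of k] that by simp
  have "(\<Sum>k<m. Polynomial.smult (cc k) (Q k)) = (\<Sum>k<m. Polynomial.smult (B p (Q k) / h k) (Q k))"
    by (rule sum.cong) (use cck in auto)
  then show ?thesis using cc by metis
qed

lemma parseval:
  assumes "deglt p m"
  shows "B p r = (\<Sum>k<m. B p (Q k) * B r (Q k) / h k)"
proof -
  have "B p r = B (\<Sum>k<m. Polynomial.smult (B p (Q k) / h k) (Q k)) r"
    using expansion[OF assms] by simp
  also have "\<dots> = (\<Sum>k<m. B p (Q k) * B r (Q k) / h k)"
    by (simp add: B_sum B_smult B_sym[of "Q _"])
  finally show ?thesis .
qed

lemma xrec: "pCons 0 (Q j) = Q (Suc j) + Polynomial.smult (b j) (Q j) + Polynomial.smult (c j) (if j = 0 then 0 else Q (j - 1))"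
  using OPr_Suc[of B j] by (simp add: algebra_simps)

lemma c_h: "c (Suc j) * h j = h (Suc j)"
  unfolding cB_def using h_pos[of j] by simp

lemma xQ_same: "B (pCons 0 (Q j)) (Q j) = b j * h j"
  unfolding bB_def using h_pos[of j] by simp

lemma xQ_far: "Suc j < k \<Longrightarrow> B (pCons 0 (Q j)) (Q k) = 0"
  using orth_low[of "pCons 0 (Q j)" k] deglt_pCons[of "Q j" "Suc j"] deglt_Q[of j "Suc j"]
    deglt_mono[of "pCons 0 (Q j)" "Suc (Suc j)" k] by simp

lemma xQ_next: "B (pCons 0 (Q j)) (Q (Suc j)) = h (Suc j)"
proof -
  have d: "deglt (pCons 0 (Q j) - Q (Suc j)) (Suc j)"
    unfolding deglt_def
  proof (intro allI impI)
    fix a assume "Suc j \<le> a"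
    then show "coeff (pCons 0 (Q j) - Q (Suc j)) a = 0"
      using OPr_monic[of B j] OPr_monic[of B "Suc j"] OPr_high[of j] OPr_high[of "Suc j" a]
      by (cases "a = Suc j") (auto simp: coeff_pCons split: nat.splits)
  qed
  have "B (pCons 0 (Q j)) (Q (Suc j)) = B (pCons 0 (Q j) - Q (Suc j)) (Q (Suc j)) + h (Suc j)"
    by (simp add: B_diff hB_def)
  then show ?thesis using orth_low[OF d] by simp
qed

definition cc :: "nat \<Rightarrow> nat \<Rightarrow> real" where "cc n k = B (X2 (Q n)) (Q k)"

lemma X2_shift: "B (X2 p) q = B p (X2 q)"
  unfolding X2_def by (simp add: B_shift)

lemma cc_sym: "cc n k = cc k n"
  unfolding cc_def by (metis X2_shift B_sym)

lemma deglt_X2: "deglt p m \<Longrightarrow> deglt (X2 p) (Suc (Suc m))"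
  unfolding X2_def using deglt_pCons by blast

lemma cc_far: "k + 2 < n \<Longrightarrow> cc n k = 0"
  unfolding cc_def X2_shift
  using orth_low2[of "X2 (Q k)" n] deglt_X2[of "Q k" "Suc k"] deglt_Q[of k "Suc k"]
    deglt_mono[of "X2 (Q k)" "Suc (Suc (Suc k))" n] by simp

lemma cc_2: "cc n (Suc (Suc n)) = h (Suc (Suc n))"
proof -
  have d: "deglt (X2 (Q n) - Q (Suc (Suc n))) (Suc (Suc n))"
    unfolding deglt_def
  proof (intro allI impI)
    fix a assume "Suc (Suc n) \<le> a"
    then show "coeff (X2 (Q n) - Q (Suc (Suc n))) a = 0"
      using OPr_monic[of B n] OPr_monic[of B "Suc (Suc n)"] OPr_high[of n] OPr_high[of "Suc (Suc n)" a]
      by (cases "a = Suc (Suc n)") (auto simp: coeff_pCons X2_def split: nat.splits)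
  qed
  have "cc n (Suc (Suc n)) = B (X2 (Q n) - Q (Suc (Suc n))) (Q (Suc (Suc n))) + h (Suc (Suc n))"
    unfolding cc_def by (simp add: B_diff hB_def)
  then show ?thesis using orth_low[OF d] by simp
qed

lemma cc_1: "cc n (Suc n) = h (Suc n) * (b n + b (Suc n))"
proof -
  have "cc n (Suc n) = B (pCons 0 (Q n)) (pCons 0 (Q (Suc n)))"
    unfolding cc_def X2_def by (simp add: B_shift)
  also have "\<dots> = B (pCons 0 (Q n)) (Q (Suc (Suc n))) + b (Suc n) * B (pCons 0 (Q n)) (Q (Suc n))
       + c (Suc n) * B (pCons 0 (Q n)) (Q n)"
    by (subst xrec[of "Suc n"]) (simp add: B_add2 B_smult2)
  also have "\<dots> = b (Suc n) * h (Suc n) + c (Suc n) * h n * b n"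
    using xQ_far[of n "Suc (Suc n)"] xQ_next[of n] xQ_same[of n] by simp
  also have "\<dots> = h (Suc n) * (b n + b (Suc n))" using c_h[of n] by (simp add: algebra_simps)
  finally show ?thesis .
qed

definition ee :: "nat \<Rightarrow> nat \<Rightarrow> real" where "ee n k = (cc n k)\<^sup>2 / (h n * h k)"

lemma ee_sym: "ee n k = ee k n"
  unfolding ee_def using cc_sym by (simp add: mult.commute)

definition LL :: "nat \<Rightarrow> real" where
  "LL n = ((\<Sum>k<n+3. (cc n k)\<^sup>2 / h k) - 2 * (\<Sum>k<n. (cc n k)\<^sup>2 / h k)) / h n - (cc n n)\<^sup>2 / (h n)\<^sup>2"

lemma LL_eq: "LL n = ee n (n+1) + ee n (n+2) - (if n \<ge> 1 then ee n (n-1) else 0)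
   - (if n \<ge> 2 then ee n (n-2) else 0)"
proof -
  have hp: "h n > 0" by (rule h_pos)
  have s3: "(\<Sum>k<n+3. (cc n k)\<^sup>2 / h k) = (\<Sum>k<n. (cc n k)\<^sup>2 / h k) + (cc n n)\<^sup>2 / h n
     + (cc n (n+1))\<^sup>2 / h (n+1) + (cc n (n+2))\<^sup>2 / h (n+2)"
    by (simp add: numeral_3_eq_3)
  have sl: "(\<Sum>k<n. (cc n k)\<^sup>2 / h k) = (if n \<ge> 1 then (cc n (n-1))\<^sup>2 / h (n-1) else 0)
       + (if n \<ge> 2 then (cc n (n-2))\<^sup>2 / h (n-2) else 0)"
  proof (cases n)
    case 0 then show ?thesis by simp
  next
    case (Suc m)
    show ?thesis
    proof (cases m)
      case 0 then show ?thesis using Suc by simp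
    next
      case (Suc j)
      have z: "(\<Sum>k<j. (cc n k)\<^sup>2 / h k) = 0"
        using cc_far \<open>n = Suc m\<close> Suc by (intro sum.neutral) auto
      show ?thesis using z \<open>n = Suc m\<close> Suc by simp
    qed
  qed
  show ?thesis unfolding LL_def ee_def s3 sl using hp
    by (simp add: field_simps power2_eq_square)
qed

lemma telescope:
  "(\<Sum>n<Suc M. LL n) = ee M (M+1) + ee M (M+2) + (if M \<ge> 1 then ee (M-1) (M+1) else 0)"
proof (induction M)
  case 0 then show ?case using LL_eq[of 0] by simp
next
  case (Suc M)
  have "(\<Sum>n<Suc (Suc M). LL n) = (\<Sum>n<Suc M. LL n) + LL (Suc M)" by simp
  also have "\<dots> = ee (Suc M) (Suc M + 1) + ee (Suc M) (Suc M + 2) + ee M (Suc M + 1)"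
    unfolding Suc LL_eq[of "Suc M"] using ee_sym[of M "Suc M"] ee_sym[of "M - 1" "Suc M"]
    by (cases M) (auto simp: ee_sym)
  finally show ?case by simp
qed

lemma final_value:
  assumes "N \<ge> 1"
  shows "(\<Sum>n<N. LL n) = c N * (c (N - 1) + c (N + 1) + (b N)\<^sup>2 + 2 * b N * b (N - 1) + (b (N - 1))\<^sup>2)"
proof -
  obtain M where N: "N = Suc M" using assms by (cases N) auto
  have e1: "ee M (M+1) = c (Suc M) * (b M + b (Suc M))\<^sup>2"
    unfolding ee_def using cc_1[of M] h_pos[of M] h_pos[of "Suc M"]
    by (simp add: cB_def field_simps power2_eq_square)
  have e2: "ee M (M+2) = c (Suc (Suc M)) * c (Suc M)"
    unfolding ee_def using cc_2[of M] h_pos[of M] h_pos[of "Suc M"] h_pos[of "Suc (Suc M)"]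
    by (simp add: cB_def field_simps power2_eq_square)
  have e3: "(if M \<ge> 1 then ee (M-1) (M+1) else 0) = c (Suc M) * c M"
  proof (cases M)
    case 0 then show ?thesis by (simp add: cB_def)
  next
    case (Suc j)
    then show ?thesis unfolding ee_def using cc_2[of j] h_pos[of j] h_pos[of "Suc j"] h_pos[of "Suc (Suc j)"]
      by (simp add: cB_def field_simps power2_eq_square)
  qed
  show ?thesis unfolding N telescope e1 e2 e3
    by (simp add: power2_eq_square algebra_simps)
qed

end


lemma det_rowscale:
  "Determinant.det (mat m m (\<lambda>(j,i). (d j :: 'a :: comm_ring_1) * f j i))
     = (\<Prod>j<m. d j) * Determinant.det (mat m m (\<lambda>(j,i). f j i))"
proof -
  have "Determinant.det (mat m m (\<lambda>(j,i). d j * f j i))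
     = (\<Sum>p | p permutes {0..<m}. of_int (sign p) * (\<Prod>i = 0..<m. d i * f i (p i)))"
    by (subst det_def'[of _ m]) auto
  also have "\<dots> = (\<Sum>p | p permutes {0..<m}. (\<Prod>j<m. d j) * (of_int (sign p) * (\<Prod>i = 0..<m. f i (p i))))"
    by (rule sum.cong) (auto simp: prod.distrib atLeast0LessThan)
  also have "\<dots> = (\<Prod>j<m. d j) * Determinant.det (mat m m (\<lambda>(j,i). f j i))"
    by (subst det_def'[of _ m]) (auto simp: sum_distrib_left)
  finally show ?thesis .
qed

lemma vandermonde_det:
  "Determinant.det (mat n n (\<lambda>(j,i). (x j :: 'a :: idom) ^ i))
     = (\<Prod>j<n. \<Prod>k\<in>{Suc j..<n}. (x k - x j))"
proof (induction n arbitrary: x)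
  case 0 then show ?case by (simp add: det_dim_zero)
next
  case (Suc m)
  define n where "n = Suc m"
  define V where "V = mat n n (\<lambda>(j,i). x j ^ i)"
  define E where "E = mat n n (\<lambda>(a,i). (if a = i then 1 else 0) + (if Suc a = i then - x 0 else 0))"
  have V: "V \<in> carrier_mat n n" and E: "E \<in> carrier_mat n n" unfolding V_def E_def by auto
  have detE: "Determinant.det E = 1"
  proof -
    have "upper_triangular E" unfolding E_def upper_triangular_def by auto
    then have "Determinant.det E = prod_list (diag_mat E)" using det_upper_triangular E by blast
    also have "diag_mat E = map (\<lambda>_. 1) [0..<n]" unfolding diag_mat_def E_def by (auto intro: map_cong)
    also have "prod_list (map (\<lambda>_. 1::'a) [0..<n]) = 1" by (induction n) auto
    finally show ?thesis .
  qed
  have VE: "(V * E) $$ (j, i) = x j ^ i - (if i > 0 then x 0 * x j ^ (i - 1) else 0)"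
    if "j < n" "i < n" for j i
  proof -
    have "(V * E) $$ (j, i) = (\<Sum>a = 0..<n. x j ^ a * ((if a = i then 1 else 0) + (if Suc a = i then - x 0 else 0)))"
      using that V E unfolding V_def E_def by (simp add: scalar_prod_def)
    also have "\<dots> = (\<Sum>a = 0..<n. (if a = i then x j ^ a else 0)) + (\<Sum>a = 0..<n. (if Suc a = i then - x 0 * x j ^ a else 0))"
      by (subst sum.distrib[symmetric], rule sum.cong) (auto simp: algebra_simps)
    also have "(\<Sum>a = 0..<n. (if a = i then x j ^ a else 0)) = x j ^ i" using that by simp
    also have "(\<Sum>a = 0..<n. (if Suc a = i then - x 0 * x j ^ a else 0)) = (if i > 0 then - x 0 * x j ^ (i - 1) else 0)"
    proof (cases i)
      case 0 then show ?thesis by simp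
    next
      case (Suc i')
      have "(\<Sum>a = 0..<n. (if Suc a = i then - x 0 * x j ^ a else 0)) = (\<Sum>a = 0..<n. (if a = i' then - x 0 * x j ^ a else 0))"
        using Suc by (intro sum.cong) auto
      also have "\<dots> = - x 0 * x j ^ i'" using Suc that by simp
      finally show ?thesis using Suc by simp
    qed
    finally show ?thesis by simp
  qed
  define A4 where "A4 = mat m m (\<lambda>(j,i). (x (Suc j) - x 0) * x (Suc j) ^ i)"
  have blk: "V * E = four_block_mat (mat 1 1 (\<lambda>_. 1)) (0\<^sub>m 1 m) (mat m 1 (\<lambda>_. 1)) A4"
  proof (rule eq_matI)
    show "dim_row (V * E) = dim_row (four_block_mat (mat 1 1 (\<lambda>_. 1)) (0\<^sub>m 1 m) (mat m 1 (\<lambda>_. 1)) A4)"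
      using V unfolding A4_def n_def by simp
    show "dim_col (V * E) = dim_col (four_block_mat (mat 1 1 (\<lambda>_. 1)) (0\<^sub>m 1 m) (mat m 1 (\<lambda>_. 1)) A4)"
      using E unfolding A4_def n_def by simp
    fix j i assume j: "j < dim_row (four_block_mat (mat 1 1 (\<lambda>_. 1)) (0\<^sub>m 1 m) (mat m 1 (\<lambda>_. 1)) A4)"
      and i: "i < dim_col (four_block_mat (mat 1 1 (\<lambda>_. 1)) (0\<^sub>m 1 m) (mat m 1 (\<lambda>_. 1)) A4)"
    then have j': "j < n" and i': "i < n" unfolding A4_def n_def by auto
    show "(V * E) $$ (j, i) = four_block_mat (mat 1 1 (\<lambda>_. 1)) (0\<^sub>m 1 m) (mat m 1 (\<lambda>_. 1)) A4 $$ (j, i)"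
      unfolding VE[OF j' i'] using j' i' unfolding A4_def n_def four_block_mat_def
      by (cases i; cases j) (auto simp: algebra_simps)
  qed
  have "Determinant.det V = Determinant.det (V * E)"
    using det_mult[OF V E] detE by simp
  also have "\<dots> = Determinant.det (mat 1 1 (\<lambda>_. 1::'a)) * Determinant.det A4"
    unfolding blk by (rule det_four_block_mat_upper_right_zero) (auto simp: A4_def)
  also have "Determinant.det (mat 1 1 (\<lambda>_. 1::'a)) = 1"
    by (subst det_single) auto
  also have "Determinant.det A4 = (\<Prod>j<m. (x (Suc j) - x 0)) * Determinant.det (mat m m (\<lambda>(j,i). x (Suc j) ^ i))"
    unfolding A4_def by (rule det_rowscale)
  also have "Determinant.det (mat m m (\<lambda>(j,i). x (Suc j) ^ i)) = (\<Prod>j<m. \<Prod>k\<in>{Suc j..<m}. (x (Suc k) - x (Suc j)))"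
    using Suc.IH[of "\<lambda>j. x (Suc j)"] by simp
  also have "1 * ((\<Prod>j<m. (x (Suc j) - x 0)) * (\<Prod>j<m. \<Prod>k\<in>{Suc j..<m}. (x (Suc k) - x (Suc j))))
      = (\<Prod>j<Suc m. \<Prod>k\<in>{Suc j..<Suc m}. (x k - x j))"
  proof -
    have a: "(\<Prod>k\<in>{Suc 0..<Suc m}. (x k - x 0)) = (\<Prod>j<m. (x (Suc j) - x 0))"
      by (subst prod.shift_bounds_Suc_ivl) (simp add: atLeast0LessThan)
    have b: "(\<Prod>k\<in>{Suc (Suc j)..<Suc m}. (x k - x (Suc j))) = (\<Prod>k\<in>{Suc j..<m}. (x (Suc k) - x (Suc j)))" for j
      by (subst prod.shift_bounds_Suc_ivl) simp
    show ?thesis by (simp only: prod.lessThan_Suc_shift a b) simp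
  qed
  finally show ?case unfolding V_def n_def .
qed


lemma vdm_poly:
  fixes P :: "nat \<Rightarrow> real poly"
  assumes mon: "\<And>i. coeff (P i) i = 1" and hi: "\<And>i a. a > i \<Longrightarrow> coeff (P i) a = 0"
  shows "(\<Prod>j<n. \<Prod>k\<in>{Suc j..<n}. (z k - z j))
     = (\<Sum>p | p permutes {0..<n}. of_int (sign p) * (\<Prod>j<n. poly (P (p j)) (z j)))"
proof -
  define V where "V = mat n n (\<lambda>(j,i). z j ^ i)"
  define U where "U = mat n n (\<lambda>(a,i). coeff (P i) a)"
  have V: "V \<in> carrier_mat n n" and U: "U \<in> carrier_mat n n" unfolding V_def U_def by auto
  have detU: "Determinant.det U = 1"
  proof -
    have "upper_triangular U" unfolding U_def upper_triangular_def using hi by auto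
    then have "Determinant.det U = prod_list (diag_mat U)" using det_upper_triangular U by blast
    also have "diag_mat U = map (\<lambda>_. 1) [0..<n]" unfolding diag_mat_def U_def using mon by (auto intro: map_cong)
    also have "prod_list (map (\<lambda>_. 1::real) [0..<n]) = 1" by (induction n) auto
    finally show ?thesis .
  qed
  have deg: "degree (P i) \<le> i" for i using hi by (meson degree_le not_le_imp_less)
  have VU: "V * U = mat n n (\<lambda>(j,i). poly (P i) (z j))"
  proof (rule eq_matI)
    fix j i assume j: "j < dim_row (mat n n (\<lambda>(j,i). poly (P i) (z j)))" and i: "i < dim_col (mat n n (\<lambda>(j,i). poly (P i) (z j)))"
    then have j': "j < n" and i': "i < n" by auto
    have "(V * U) $$ (j, i) = (\<Sum>a = 0..<n. z j ^ a * coeff (P i) a)"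
      using j' i' V U unfolding V_def U_def by (simp add: scalar_prod_def)
    also have "\<dots> = (\<Sum>a\<le>degree (P i). coeff (P i) a * z j ^ a)"
    proof (rule sum.mono_neutral_cong_right)
      show "{..degree (P i)} \<subseteq> {0..<n}" using deg[of i] i' by auto
      show "\<forall>a\<in>{0..<n} - {..degree (P i)}. z j ^ a * coeff (P i) a = 0"
        by (auto simp: coeff_eq_0)
    qed (auto simp: mult.commute)
    also have "\<dots> = poly (P i) (z j)" by (simp add: poly_altdef)
    finally show "(V * U) $$ (j, i) = mat n n (\<lambda>(j,i). poly (P i) (z j)) $$ (j, i)" using j' i' by simp
  qed (use V U in auto)
  have "(\<Prod>j<n. \<Prod>k\<in>{Suc j..<n}. (z k - z j)) = Determinant.det V"
    unfolding V_def by (rule vandermonde_det[symmetric])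
  also have "\<dots> = Determinant.det (V * U)" using det_mult[OF V U] detU by simp
  also have "\<dots> = (\<Sum>p | p permutes {0..<n}. of_int (sign p) * (\<Prod>j<n. poly (P (p j)) (z j)))"
    unfolding VU
    by (subst det_def'[of _ n]) (auto intro!: sum.cong prod.cong simp: atLeast0LessThan)
  finally show ?thesis .
qed

lemma vdm_sq:
  fixes P :: "nat \<Rightarrow> real poly"
  assumes mon: "\<And>i. coeff (P i) i = 1" and hi: "\<And>i a. a > i \<Longrightarrow> coeff (P i) a = 0"
  shows "(\<Prod>j<n. \<Prod>k\<in>{Suc j..<n}. (z j - z k)\<^sup>2)
     = (\<Sum>p | p permutes {0..<n}. \<Sum>q | q permutes {0..<n}. of_int (sign p * sign q) *
          (\<Prod>j<n. poly (P (p j)) (z j) * poly (P (q j)) (z j)))"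
proof -
  have "(\<Prod>j<n. \<Prod>k\<in>{Suc j..<n}. (z j - z k)\<^sup>2) = (\<Prod>j<n. \<Prod>k\<in>{Suc j..<n}. (z k - z j))\<^sup>2"
    by (simp add: power2_commute prod_power_distrib)
  also have "\<dots> = (\<Sum>p | p permutes {0..<n}. of_int (sign p) * (\<Prod>j<n. poly (P (p j)) (z j)))
      * (\<Sum>q | q permutes {0..<n}. of_int (sign q) * (\<Prod>j<n. poly (P (q j)) (z j)))"
    unfolding power2_eq_square using vdm_poly[OF mon hi, of z n] by simp
  also have "\<dots> = (\<Sum>p | p permutes {0..<n}. \<Sum>q | q permutes {0..<n}. of_int (sign p * sign q) *
          (\<Prod>j<n. poly (P (p j)) (z j) * poly (P (q j)) (z j)))"
    by (simp add: sum_product prod.distrib algebra_simps)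
  finally show ?thesis .
qed


lemma Vpot_upd2:
  assumes "1 \<le> d"
  shows "Vpot d (u(2 := a)) x = Vpot d (u(2 := a')) x + (a - a') * x\<^sup>2"
proof -
  have m: "2 \<in> {1..2*d}" using assms by auto
  have "Vpot d (u(2 := a)) x = a * x^2 + (\<Sum>j\<in>{1..2*d} - {2}. u j * x ^ j)"
    unfolding Vpot_def by (subst sum.remove[OF _ m]) (auto intro!: sum.cong)
  moreover have "Vpot d (u(2 := a')) x = a' * x^2 + (\<Sum>j\<in>{1..2*d} - {2}. u j * x ^ j)"
    unfolding Vpot_def by (subst sum.remove[OF _ m]) (auto intro!: sum.cong)
  ultimately show ?thesis by (simp add: algebra_simps)
qed

lemma Vpot_lower:
  assumes d: "1 \<le> d" and pos: "u (2*d) > 0"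
  shows "\<exists>\<alpha>>0. \<exists>C. \<forall>x. \<alpha> * x\<^sup>2 - C \<le> Vpot d u x"
proof -
  define vv where "vv = u (2*d)"
  define S where "S = (\<Sum>j\<in>{1..<2*d}. \<bar>u j\<bar>)"
  define R where "R = max 1 (2 * S / vv)"
  define C1 where "C1 = (\<Sum>j\<in>{1..2*d}. \<bar>u j\<bar> * R ^ j)"
  have vv: "vv > 0" using pos vv_def by simp
  have R1: "R \<ge> 1" unfolding R_def by simp
  have S0: "S \<ge> 0" unfolding S_def by (simp add: sum_nonneg)
  have big: "vv / 2 * x\<^sup>2 \<le> Vpot d u x" if x: "\<bar>x\<bar> \<ge> R" for x
  proof -
    have x1: "\<bar>x\<bar> \<ge> 1" using x R1 by simp
    have split: "Vpot d u x = vv * x^(2*d) + (\<Sum>j\<in>{1..<2*d}. u j * x ^ j)"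
    proof -
      have "{1..2*d} = insert (2*d) {1..<2*d}" using d by auto
      then show ?thesis unfolding Vpot_def vv_def by simp
    qed
    have "\<bar>\<Sum>j\<in>{1..<2*d}. u j * x ^ j\<bar> \<le> (\<Sum>j\<in>{1..<2*d}. \<bar>u j\<bar> * \<bar>x\<bar>^(2*d-1))"
    proof -
      have "\<bar>\<Sum>j\<in>{1..<2*d}. u j * x ^ j\<bar> \<le> (\<Sum>j\<in>{1..<2*d}. \<bar>u j * x ^ j\<bar>)" by (rule sum_abs)
      also have "\<dots> \<le> (\<Sum>j\<in>{1..<2*d}. \<bar>u j\<bar> * \<bar>x\<bar>^(2*d-1))"
      proof (rule sum_mono)
        fix j assume "j \<in> {1..<2*d}"
        then have "j \<le> 2*d-1" by auto
        then have "\<bar>x\<bar>^j \<le> \<bar>x\<bar>^(2*d-1)" using x1 by (simp add: power_increasing)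
        then show "\<bar>u j * x ^ j\<bar> \<le> \<bar>u j\<bar> * \<bar>x\<bar>^(2*d-1)"
          by (simp add: abs_mult power_abs mult_left_mono)
      qed
      finally show ?thesis .
    qed
    also have "\<dots> = S * \<bar>x\<bar>^(2*d-1)" unfolding S_def by (simp add: sum_distrib_right)
    also have "\<dots> \<le> vv/2 * \<bar>x\<bar> * \<bar>x\<bar>^(2*d-1)"
    proof -
      have "2 * S / vv \<le> \<bar>x\<bar>" using x unfolding R_def by linarith
      then have "vv/2 * (2 * S / vv) \<le> vv/2 * \<bar>x\<bar>" using vv by (intro mult_left_mono) auto
      moreover have "vv/2 * (2 * S / vv) = S" using vv by simp
      ultimately have "S \<le> vv/2 * \<bar>x\<bar>" by simp
      then show ?thesis by (intro mult_right_mono) auto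
    qed
    also have "\<dots> = vv/2 * \<bar>x\<bar>^(2*d)"
    proof -
      have "\<bar>x\<bar> * \<bar>x\<bar>^(2*d-1) = \<bar>x\<bar>^(2*d)" 
      proof -
        have "Suc (2*d-1) = 2*d" using d by simp
        then show ?thesis by (metis power_Suc)
      qed
      then show ?thesis by simp
    qed
    finally have b1: "\<bar>\<Sum>j\<in>{1..<2*d}. u j * x ^ j\<bar> \<le> vv/2 * \<bar>x\<bar>^(2*d)" .
    have xe: "x^(2*d) = \<bar>x\<bar>^(2*d)" by (simp add: power_even_abs)
    have "\<bar>x\<bar>^2 \<le> \<bar>x\<bar>^(2*d)" using x1 d by (intro power_increasing) auto
    then have "x\<^sup>2 \<le> \<bar>x\<bar>^(2*d)" by simp
    then have "vv/2 * x\<^sup>2 \<le> vv/2 * \<bar>x\<bar>^(2*d)" using vv by simp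
    moreover have "vv * x^(2*d) = 2 * (vv/2 * \<bar>x\<bar>^(2*d))" using xe by simp
    moreover have "- (\<Sum>j\<in>{1..<2*d}. u j * x ^ j) \<le> \<bar>\<Sum>j\<in>{1..<2*d}. u j * x ^ j\<bar>" by (rule abs_ge_minus_self)
    ultimately show ?thesis unfolding split using b1 by linarith
  qed
  have small: "- C1 \<le> Vpot d u x" if x: "\<bar>x\<bar> \<le> R" for x
  proof -
    have "\<bar>Vpot d u x\<bar> \<le> (\<Sum>j\<in>{1..2*d}. \<bar>u j * x ^ j\<bar>)" unfolding Vpot_def by (rule sum_abs)
    also have "\<dots> \<le> C1" unfolding C1_def
    proof (rule sum_mono)
      fix j assume "j \<in> {1..2*d}"
      have "\<bar>x\<bar>^j \<le> R^j" using x by (intro power_mono) auto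
      then show "\<bar>u j * x ^ j\<bar> \<le> \<bar>u j\<bar> * R ^ j" by (simp add: abs_mult power_abs mult_left_mono)
    qed
    finally show ?thesis by linarith
  qed
  show ?thesis
  proof (intro exI conjI allI)
    show "vv/2 > 0" using vv by simp
    fix x
    show "vv/2 * x\<^sup>2 - (C1 + vv/2 * R\<^sup>2) \<le> Vpot d u x"
    proof (cases "\<bar>x\<bar> \<ge> R")
      case True
      have "C1 \<ge> 0" unfolding C1_def using R1 by (intro sum_nonneg) auto
      moreover have "vv/2 * R\<^sup>2 \<ge> 0" using vv by simp
      ultimately show ?thesis using big[OF True] by linarith
    next
      case False
      then have "\<bar>x\<bar>^2 \<le> R^2" by (intro power_mono) auto
      then have "x\<^sup>2 \<le> R\<^sup>2" by simp
      then have "vv/2 * x\<^sup>2 \<le> vv/2 * R\<^sup>2" using vv by simp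
      then show ?thesis using small[of x] False by linarith
    qed
  qed
qed

lemma borel_measurable_Vpot[measurable]: "(\<lambda>x. Vpot d u x) \<in> borel_measurable borel"
  unfolding Vpot_def by measurable

lemma integrable_gauss_abs:
  assumes a: "a > 0"
  shows "integrable lborel (\<lambda>x::real. \<bar>x\<bar>^k * exp (- a * x\<^sup>2))"
proof -
  define \<sigma> where "\<sigma> = sqrt (1 / (2 * a))"
  have s2: "\<sigma>\<^sup>2 = 1 / (2 * a)" unfolding \<sigma>_def using a by simp
  have sp: "\<sigma> > 0" unfolding \<sigma>_def using a by simp
  have i: "integrable lborel (\<lambda>x. sqrt (2 * pi * \<sigma>\<^sup>2) * (normal_density 0 \<sigma> x * \<bar>x - 0\<bar>^k))"
    using integrable_normal_moment_abs[where \<mu>=0 and \<sigma>=\<sigma> and k=k] sp by (intro integrable_mult_right) auto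
  have "sqrt (2 * pi * \<sigma>\<^sup>2) * (normal_density 0 \<sigma> x * \<bar>x - 0\<bar>^k) = \<bar>x\<bar>^k * exp (- a * x\<^sup>2)" for x
  proof -
    have "sqrt (2 * pi * \<sigma>\<^sup>2) > 0" using a s2 by simp
    moreover have "-(x - 0)\<^sup>2 / (2 * \<sigma>\<^sup>2) = - a * x\<^sup>2" unfolding s2 using a by (simp add: field_simps)
    ultimately show ?thesis unfolding normal_density_def using sp by (simp add: field_simps)
  qed
  then have eq: "\<And>x. sqrt (2 * pi * \<sigma>\<^sup>2) * (normal_density 0 \<sigma> x * \<bar>x - 0\<bar>^k) = \<bar>x\<bar>^k * exp (- a * x\<^sup>2)" .
  show ?thesis using i unfolding eq .
qed

lemma integrable_Vpot:
  assumes d: "1 \<le> d" and pos: "u (2*d) > 0" and c: "cc > 0"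
  shows "integrable lborel (\<lambda>x. \<bar>x\<bar>^k * exp (- cc * Vpot d u x))"
proof -
  obtain \<alpha> C where \<alpha>: "\<alpha> > 0" and b: "\<And>x. \<alpha> * x\<^sup>2 - C \<le> Vpot d u x"
    using Vpot_lower[of d u, OF d pos] by blast
  have i: "integrable lborel (\<lambda>x. exp (cc * C) * (\<bar>x\<bar>^k * exp (- (cc * \<alpha>) * x\<^sup>2)))"
    using integrable_gauss_abs[of "cc * \<alpha>" k] \<alpha> c by (intro integrable_mult_right) simp
  show ?thesis
  proof (rule Bochner_Integration.integrable_bound[OF i])
    show "AE x in lborel. norm (\<bar>x\<bar>^k * exp (- cc * Vpot d u x)) \<le> norm (exp (cc * C) * (\<bar>x\<bar>^k * exp (- (cc * \<alpha>) * x\<^sup>2)))"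
    proof (intro AE_I2)
      fix x
      have "- cc * Vpot d u x \<le> cc * C + (- (cc * \<alpha>) * x\<^sup>2)"
      proof -
        have "cc * (\<alpha> * x\<^sup>2 - C) \<le> cc * Vpot d u x" using b[of x] c by (intro mult_left_mono) auto
        then show ?thesis by (simp add: algebra_simps)
      qed
      then have "exp (- cc * Vpot d u x) \<le> exp (cc * C) * exp (- (cc * \<alpha>) * x\<^sup>2)"
        by (simp add: exp_add[symmetric])
      then show "norm (\<bar>x\<bar>^k * exp (- cc * Vpot d u x)) \<le> norm (exp (cc * C) * (\<bar>x\<bar>^k * exp (- (cc * \<alpha>) * x\<^sup>2)))"
        by (simp add: abs_mult mult_left_mono mult.left_commute)
    qed
  qed measurable
qed

lemma exp_taylor2: fixes H :: real shows "\<bar>exp (- H) - 1 + H\<bar> \<le> H\<^sup>2 / 2 * max 1 (exp (- H))"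
proof (cases "H \<ge> 0")
  case True
  obtain t where "exp (- H) = (\<Sum>m<3. (- H) ^ m / fact m) + exp t / fact 3 * (- H) ^ 3"
    using Maclaurin_exp_le[of "- H" 3] by blast
  then have "exp (- H) = 1 - H + H\<^sup>2 / 2 - exp t / 6 * H ^ 3"
    by (simp add: numeral_3_eq_3 power2_eq_square fact_numeral)
  moreover have "exp t / 6 * H ^ 3 \<ge> 0" using True by simp
  moreover have "exp (- H) - 1 + H \<ge> 0" using exp_ge_add_one_self[of "- H"] by simp
  ultimately have "\<bar>exp (- H) - 1 + H\<bar> \<le> H\<^sup>2 / 2" by linarith
  moreover have "H\<^sup>2 / 2 \<le> H\<^sup>2 / 2 * max 1 (exp (- H))"
    by (rule mult_le_cancel_left1[THEN iffD2]) simp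
  ultimately show ?thesis by linarith
next
  case False
  obtain t where t: "\<bar>t\<bar> \<le> \<bar>- H\<bar>" and e: "exp (- H) = (\<Sum>m<2. (- H) ^ m / fact m) + exp t / fact 2 * (- H) ^ 2"
    using Maclaurin_exp_le[of "- H" 2] by blast
  then have E: "exp (- H) - 1 + H = exp t / 2 * H\<^sup>2" by (simp add: numeral_2_eq_2)
  have "exp t \<le> exp (- H)" using t False by simp
  also have "exp (- H) \<le> max 1 (exp (- H))" by simp
  finally have "exp t / 2 * H\<^sup>2 \<le> max 1 (exp (- H)) / 2 * H\<^sup>2"
    by (intro mult_right_mono divide_right_mono) auto
  moreover have "exp t / 2 * H\<^sup>2 \<ge> 0" by simp
  ultimately show ?thesis unfolding E by (simp add: mult.commute)
qed


locale setting =
  fixes d N :: nat and v :: "nat \<Rightarrow> real"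
  assumes d1: "1 \<le> d" and N1: "1 \<le> N" and vpos: "v (2*d) > 0"
begin

definition "t0 = real N * v 2"
definition "Vs s = v(2 := s / real N)"
definition "W s x = exp (- real N * Vpot d (Vs s) x)"
definition "del = (if d = 1 then t0 / 2 else 1)"
definition "slo = t0 - del"
definition "I = {slo <..< t0 + del}"
definition "mu k s = (\<integral>x. x ^ k * W s x \<partial>lborel)"

lemma Npos: "real N > 0" using N1 by simp

lemma Vs_t0: "Vs t0 = v"
  unfolding Vs_def t0_def using Npos by auto

lemma t0pos_d1: "d = 1 \<Longrightarrow> t0 > 0"
  unfolding t0_def using vpos Npos by simp

lemma del_pos: "del > 0"
  unfolding del_def using t0pos_d1 by auto

lemma t0_I: "t0 \<in> I" unfolding I_def slo_def using del_pos by auto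
lemma open_I: "open I" unfolding I_def by simp
lemma I_slo: "s \<in> I \<Longrightarrow> slo < s" unfolding I_def by simp

lemma Vs_slo_pos: "Vs slo (2*d) > 0"
proof (cases "d = 1")
  case True
  then have "slo = t0 / 2" unfolding slo_def del_def by simp
  then show ?thesis using True t0pos_d1 Npos unfolding Vs_def by simp
next
  case False
  then have "2*d \<noteq> 2" by simp
  then show ?thesis using vpos unfolding Vs_def by simp
qed

lemma W_shift: "W s x = W r x * exp (- (s - r) * x\<^sup>2)"
proof -
  have "Vpot d (Vs s) x = Vpot d (Vs r) x + (s / real N - r / real N) * x\<^sup>2"
    unfolding Vs_def by (rule Vpot_upd2[OF d1])
  then have "- real N * Vpot d (Vs s) x = - real N * Vpot d (Vs r) x + (- (s - r) * x\<^sup>2)"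
    using Npos by (simp add: field_simps)
  then show ?thesis unfolding W_def by (subst (1) \<open>- real N * Vpot d (Vs s) x = _\<close>) (rule exp_add)
qed

lemma W_pos: "W s x > 0" unfolding W_def by simp

lemma W_le: "slo \<le> s \<Longrightarrow> W s x \<le> W slo x"
proof -
  assume a: "slo \<le> s"
  have "- (s - slo) * x\<^sup>2 \<le> 0" using a by (simp add: mult_nonpos_nonneg)
  then have "exp (- (s - slo) * x\<^sup>2) \<le> 1" by simp
  then show ?thesis using W_shift[of s x slo] W_pos[of slo x] by (simp add: mult_left_le_one_le)
qed

lemma W_measurable[measurable]: "W s \<in> borel_measurable borel"
  unfolding W_def by measurable

lemma W_measurable'[measurable]: "(\<lambda>x. W s x) \<in> borel_measurable borel"
  unfolding W_def by measurable

lemma int_abs: "integrable lborel (\<lambda>x. \<bar>x\<bar>^k * W slo x)"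
  unfolding W_def using integrable_Vpot[of d "Vs slo" "real N" k, OF d1 Vs_slo_pos] Npos by simp

lemma int_mono:
  assumes "slo \<le> s"
  shows "integrable lborel (\<lambda>x. x^k * W s x)"
proof (rule Bochner_Integration.integrable_bound[OF int_abs[of k]])
  show "AE x in lborel. norm (x^k * W s x) \<le> norm (\<bar>x\<bar>^k * W slo x)"
    using W_le[OF assms] W_pos by (auto simp: abs_mult power_abs abs_of_pos intro!: mult_left_mono AE_I2)
qed measurable

lemma int_poly:
  assumes "slo \<le> s"
  shows "integrable lborel (\<lambda>x. poly p x * W s x)"
proof -
  have "integrable lborel (\<lambda>x. \<Sum>i\<le>degree p. coeff p i * (x ^ i * W s x))"
    using int_mono[OF assms] by (intro Bochner_Integration.integrable_sum Bochner_Integration.integrable_mult_right) auto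
  moreover have "(\<Sum>i\<le>degree p. coeff p i * (x ^ i * W s x)) = poly p x * W s x" for x
    by (simp add: poly_altdef sum_distrib_left algebra_simps)
  ultimately show ?thesis by simp
qed

lemma mu_key:
  assumes y: "slo \<le> y" and s0: "slo \<le> s0"
  shows "\<bar>mu k y - mu k s0 + (y - s0) * mu (k+2) s0\<bar>
     \<le> (y - s0)\<^sup>2 / 2 * (\<integral>x. \<bar>x\<bar>^(k+4) * W slo x \<partial>lborel)"
proof -
  define f where "f x = x^k * W y x - x^k * W s0 x + (y - s0) * (x^(k+2) * W s0 x)" for x
  have i1: "integrable lborel (\<lambda>x. x^k * W y x)" using int_mono[OF y] .
  have i2: "integrable lborel (\<lambda>x. x^k * W s0 x)" using int_mono[OF s0] .
  have i3: "integrable lborel (\<lambda>x. (y - s0) * (x^(k+2) * W s0 x))"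
    using int_mono[OF s0] by (intro Bochner_Integration.integrable_mult_right)
  have intf: "integrable lborel f" unfolding f_def using i1 i2 i3 by (intro Bochner_Integration.integrable_add Bochner_Integration.integrable_diff)
  have "mu k y - mu k s0 + (y - s0) * mu (k+2) s0 = (\<integral>x. f x \<partial>lborel)"
    unfolding f_def mu_def using i1 i2 i3
    by (simp add: Bochner_Integration.integral_add Bochner_Integration.integral_diff
        Bochner_Integration.integrable_diff)
  also have "\<bar>\<dots>\<bar> \<le> (\<integral>x. \<bar>f x\<bar> \<partial>lborel)" by (rule integral_abs_bound)
  also have "\<dots> \<le> (\<integral>x. (y - s0)\<^sup>2 / 2 * (\<bar>x\<bar>^(k+4) * W slo x) \<partial>lborel)"
  proof (rule integral_mono)
    show "integrable lborel (\<lambda>x. \<bar>f x\<bar>)" using intf by (rule integrable_abs)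
    show "integrable lborel (\<lambda>x. (y - s0)\<^sup>2 / 2 * (\<bar>x\<bar>^(k+4) * W slo x))"
      using int_abs by (rule Bochner_Integration.integrable_mult_right)
    fix x
    define H where "H = (y - s0) * x\<^sup>2"
    have Wy: "W y x = W s0 x * exp (- H)" unfolding H_def using W_shift[of y x s0] by (simp add: algebra_simps)
    have "f x = x^k * W s0 x * (exp (- H) - 1 + H)"
      unfolding f_def Wy H_def by (simp add: algebra_simps power_add power2_eq_square)
    then have "\<bar>f x\<bar> = \<bar>x\<bar>^k * W s0 x * \<bar>exp (- H) - 1 + H\<bar>"
      using W_pos[of s0 x] by (simp add: abs_mult power_abs)
    also have "\<dots> \<le> \<bar>x\<bar>^k * W s0 x * (H\<^sup>2 / 2 * max 1 (exp (- H)))"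
      using W_pos[of s0 x] exp_taylor2[of H] by (intro mult_left_mono) auto
    also have "\<dots> = \<bar>x\<bar>^k * H\<^sup>2 / 2 * (W s0 x * max 1 (exp (- H)))"
      by (simp add: algebra_simps)
    also have "W s0 x * max 1 (exp (- H)) = max (W s0 x) (W y x)"
      unfolding Wy using W_pos[of s0 x] by (simp add: max_mult_distrib_left)
    also have "\<bar>x\<bar>^k * H\<^sup>2 / 2 * max (W s0 x) (W y x) \<le> \<bar>x\<bar>^k * H\<^sup>2 / 2 * W slo x"
      using W_le[OF y, of x] W_le[OF s0, of x] by (intro mult_left_mono) auto
    also have "\<dots> = (y - s0)\<^sup>2 / 2 * (\<bar>x\<bar>^(k+4) * W slo x)"
    proof -
      have a4: "\<bar>x\<bar>^(k+4) = \<bar>x\<bar>^k * x^4" by (simp add: power_add power_even_abs)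
      have h2: "H\<^sup>2 = (y - s0)\<^sup>2 * x^4" unfolding H_def by (simp add: power_mult_distrib flip: power_mult)
      show ?thesis unfolding a4 h2 by (simp add: algebra_simps)
    qed
    finally show "\<bar>f x\<bar> \<le> (y - s0)\<^sup>2 / 2 * (\<bar>x\<bar>^(k+4) * W slo x)" .
  qed
  also have "\<dots> = (y - s0)\<^sup>2 / 2 * (\<integral>x. \<bar>x\<bar>^(k+4) * W slo x \<partial>lborel)"
    by (rule integral_mult_right_zero)
  finally show ?thesis .
qed

lemma mu_deriv:
  assumes s0: "s0 \<in> I"
  shows "(mu k has_real_derivative - mu (k+2) s0) (at s0)"
proof -
  define M where "M = (\<integral>x. \<bar>x\<bar>^(k+4) * W slo x \<partial>lborel)"
  have ev: "eventually (\<lambda>y. y \<in> I \<and> y \<noteq> s0) (at s0)"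
    using eventually_at_topological open_I s0 by blast
  have "((\<lambda>y. (mu k y - mu k s0) / (y - s0) - (- mu (k+2) s0)) \<longlongrightarrow> 0) (at s0)"
  proof (rule Lim_null_comparison)
    show "eventually (\<lambda>y. norm ((mu k y - mu k s0) / (y - s0) - (- mu (k+2) s0)) \<le> \<bar>y - s0\<bar> / 2 * M) (at s0)"
      using ev
    proof (rule eventually_mono)
      fix y assume y: "y \<in> I \<and> y \<noteq> s0"
      have ne: "y - s0 \<noteq> 0" using y by simp
      have "(mu k y - mu k s0) / (y - s0) - (- mu (k+2) s0) = (mu k y - mu k s0 + (y - s0) * mu (k+2) s0) / (y - s0)"
        using ne by (simp add: field_simps)
      then have "norm ((mu k y - mu k s0) / (y - s0) - (- mu (k+2) s0)) = \<bar>mu k y - mu k s0 + (y - s0) * mu (k+2) s0\<bar> / \<bar>y - s0\<bar>"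
        by simp
      also have "\<dots> \<le> (y - s0)\<^sup>2 / 2 * M / \<bar>y - s0\<bar>"
        using mu_key[of y s0 k] I_slo[of y] I_slo[OF s0] y ne unfolding M_def
        by (intro divide_right_mono) auto
      also have "\<dots> = \<bar>y - s0\<bar> / 2 * M"
      proof -
        have a: "\<bar>y - s0\<bar> > 0" using ne by simp
        have g: "\<And>a::real. a > 0 \<Longrightarrow> a\<^sup>2 / 2 * M / a = a / 2 * M" by (simp add: power2_eq_square)
        have "(y - s0)\<^sup>2 = \<bar>y - s0\<bar>\<^sup>2" by simp
        then show ?thesis using g[OF a] by metis
      qed
      finally show "norm ((mu k y - mu k s0) / (y - s0) - (- mu (k+2) s0)) \<le> \<bar>y - s0\<bar> / 2 * M" .
    qed
    have "((\<lambda>y. \<bar>y - s0\<bar> / 2 * M) \<longlongrightarrow> \<bar>s0 - s0\<bar> / 2 * M) (at s0)"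
      by (intro tendsto_intros) simp
    then show "((\<lambda>y. \<bar>y - s0\<bar> / 2 * M) \<longlongrightarrow> 0) (at s0)" by simp
  qed
  then have "((\<lambda>y. (mu k y - mu k s0) / (y - s0)) \<longlongrightarrow> - mu (k+2) s0) (at s0)"
    by (rule LIM_zero_cancel)
  then show ?thesis by (simp add: has_field_derivative_iff)
qed

end


lemma poly_sumK: fixes p :: "real poly" assumes "degree p \<le> K" shows "poly p x = (\<Sum>a\<le>K. coeff p a * x ^ a)"
proof -
  have "poly p x = (\<Sum>i\<le>degree p. coeff p i * x^i)" by (rule poly_altdef)
  also have "\<dots> = (\<Sum>a\<le>K. coeff p a * x ^ a)" using assms
    by (intro sum.mono_neutral_left) (auto simp: coeff_eq_0)
  finally show ?thesis .
qed

context setting begin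

definition "ipm m s p q = (\<integral>x. x ^ m * poly p x * poly q x * W s x \<partial>lborel)"

lemma int_ipm: "slo \<le> s \<Longrightarrow> integrable lborel (\<lambda>x. x ^ m * poly p x * poly q x * W s x)"
  using int_poly[of s "monom 1 m * p * q"] by (simp add: poly_monom mult.assoc)

lemma ipm_expand:
  assumes s: "slo \<le> s" and p: "degree p \<le> K" and q: "degree q \<le> K"
  shows "ipm m s p q = (\<Sum>a\<le>K. \<Sum>b\<le>K. coeff p a * coeff q b * mu (a+b+m) s)"
proof -
  have eq: "x ^ m * poly p x * poly q x * W s x = (\<Sum>a\<le>K. \<Sum>b\<le>K. coeff p a * coeff q b * (x^(a+b+m) * W s x))" for x
    unfolding poly_sumK[OF p] poly_sumK[OF q]
    by (simp add: sum_distrib_left sum_distrib_right power_add algebra_simps)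
  show ?thesis unfolding ipm_def eq mu_def
    using int_mono[OF s]
    by (simp add: Bochner_Integration.integrable_sum Bochner_Integration.integral_sum
        Bochner_Integration.integrable_mult_right)
qed

lemma opform_ipm:
  assumes s: "slo \<le> s"
  shows "opform (ipm 0 s)"
proof
  fix p q r :: "real poly" and a :: real
  show "ipm 0 s (p + q) r = ipm 0 s p r + ipm 0 s q r"
  proof -
    have "ipm 0 s (p + q) r = (\<integral>x. poly p x * poly r x * W s x + poly q x * poly r x * W s x \<partial>lborel)"
      unfolding ipm_def by (intro Bochner_Integration.integral_cong) (auto simp: algebra_simps)
    also have "\<dots> = ipm 0 s p r + ipm 0 s q r"
      unfolding ipm_def using int_ipm[OF s, of 0 p r] int_ipm[OF s, of 0 q r]
      by (subst Bochner_Integration.integral_add) auto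
    finally show ?thesis .
  qed
  show "ipm 0 s (Polynomial.smult a p) r = a * ipm 0 s p r"
  proof -
    have "ipm 0 s (Polynomial.smult a p) r = (\<integral>x. a * (poly p x * poly r x * W s x) \<partial>lborel)"
      unfolding ipm_def by (intro Bochner_Integration.integral_cong) (auto simp: algebra_simps)
    also have "\<dots> = a * ipm 0 s p r" unfolding ipm_def by (simp add: integral_mult_right_zero)
    finally show ?thesis .
  qed
  show "ipm 0 s p q = ipm 0 s q p"
    unfolding ipm_def by (intro Bochner_Integration.integral_cong) (auto simp: algebra_simps)
  show "ipm 0 s (pCons 0 p) q = ipm 0 s p (pCons 0 q)"
    unfolding ipm_def by (intro Bochner_Integration.integral_cong) (auto simp: algebra_simps)
next
  fix p :: "real poly"
  assume p: "p \<noteq> 0"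
  have int: "integrable lborel (\<lambda>x. (poly p x)\<^sup>2 * W s x)"
    using int_poly[OF s, of "p * p"] by (simp add: power2_eq_square)
  have nn: "AE x in lborel. 0 \<le> (poly p x)\<^sup>2 * W s x"
    using W_pos[of s] by (intro AE_I2 mult_nonneg_nonneg) (auto intro: less_imp_le)
  have ipp: "ipm 0 s p p = (\<integral>x. (poly p x)\<^sup>2 * W s x \<partial>lborel)"
    unfolding ipm_def by (intro Bochner_Integration.integral_cong) (auto simp: power2_eq_square)
  have ge: "ipm 0 s p p \<ge> 0" unfolding ipp using nn by (rule integral_nonneg_AE)
  have "ipm 0 s p p \<noteq> 0"
  proof
    assume "ipm 0 s p p = 0"
    then have "(\<integral>x. (poly p x)\<^sup>2 * W s x \<partial>lborel) = 0" unfolding ipp .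
    then have "AE x in lborel. (poly p x)\<^sup>2 * W s x = 0" using integral_nonneg_eq_0_iff_AE[OF int nn] by simp
    then have ae1: "AE x in lborel. x \<in> {x. poly p x = 0}"
    proof (rule AE_mp[OF _ AE_I2], intro impI)
      fix x assume "(poly p x)\<^sup>2 * W s x = 0"
      then show "x \<in> {x. poly p x = 0}" using W_pos[of s x] by simp
    qed
    have "{x. poly p x = 0} \<in> null_sets lborel"
      using poly_roots_finite[OF p] by (rule finite_imp_null_set_lborel)
    then have ae2: "AE x in lborel. x \<notin> {x. poly p x = 0}" by (rule AE_not_in)
    have "AE x::real in lborel. False" using AE_mp[OF ae1, of "\<lambda>_. False"] ae2 by simp
    then have "ae_filter (lborel :: real measure) = bot" using trivial_limit_def by blast
    then show False unfolding ae_filter_eq_bot_iff by simp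
  qed
  then show "ipm 0 s p p > 0" using ge by simp
qed

lemma ipm_deriv:
  assumes s0: "s0 \<in> I"
    and dP: "\<And>s. degree (P s) \<le> K" and dR: "\<And>s. degree (R s) \<le> K"
    and cP: "\<And>a. a \<le> K \<Longrightarrow> ((\<lambda>s. coeff (P s) a) has_real_derivative dp a) (at s0)"
    and cR: "\<And>a. a \<le> K \<Longrightarrow> ((\<lambda>s. coeff (R s) a) has_real_derivative dr a) (at s0)"
  shows "((\<lambda>s. ipm m s (P s) (R s)) has_real_derivative
      (ipm m s0 (\<Sum>a\<le>K. monom (dp a) a) (R s0) + ipm m s0 (P s0) (\<Sum>a\<le>K. monom (dr a) a)
       - ipm (m+2) s0 (P s0) (R s0))) (at s0)"
proof -
  define G where "G s = (\<Sum>a\<le>K. \<Sum>b\<le>K. coeff (P s) a * coeff (R s) b * mu (a+b+m) s)" for s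
  have Gd: "(G has_real_derivative (\<Sum>a\<le>K. \<Sum>b\<le>K.
      dp a * coeff (R s0) b * mu (a+b+m) s0 + coeff (P s0) a * dr b * mu (a+b+m) s0
      - coeff (P s0) a * coeff (R s0) b * mu (a+b+m+2) s0)) (at s0)"
    unfolding G_def
  proof (intro DERIV_sum)
    fix a b assume a: "a \<in> {..K}" and b: "b \<in> {..K}"
    have "((\<lambda>s. coeff (P s) a * coeff (R s) b * mu (a+b+m) s) has_real_derivative
        (dp a * coeff (R s0) b + coeff (P s0) a * dr b) * mu (a+b+m) s0
        + coeff (P s0) a * coeff (R s0) b * (- mu (a+b+m+2) s0)) (at s0)"
      using a b DERIV_mult[OF DERIV_mult[OF cP[of a] cR[of b]] mu_deriv[OF s0, of "a+b+m"]]
      by (auto elim!: DERIV_cong simp: algebra_simps)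
    then show "((\<lambda>s. coeff (P s) a * coeff (R s) b * mu (a+b+m) s) has_real_derivative
        dp a * coeff (R s0) b * mu (a+b+m) s0 + coeff (P s0) a * dr b * mu (a+b+m) s0
      - coeff (P s0) a * coeff (R s0) b * mu (a+b+m+2) s0) (at s0)"
      by (simp add: algebra_simps)
  qed
  have s0': "slo \<le> s0" using I_slo[OF s0] by simp
  have degD: "degree (\<Sum>a\<le>K. monom (c a) a) \<le> K" for c :: "nat \<Rightarrow> real"
    by (intro degree_sum_le) (auto simp: degree_monom_le intro: order.trans[OF degree_monom_le])
  have coeffD: "coeff (\<Sum>a\<le>K. monom (c a) a) j = c j" if "j \<le> K" for c :: "nat \<Rightarrow> real" and j
    using that by (simp add: coeff_sum coeff_monom)
  have "ipm m s0 (\<Sum>a\<le>K. monom (dp a) a) (R s0) + ipm m s0 (P s0) (\<Sum>a\<le>K. monom (dr a) a)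
       - ipm (m+2) s0 (P s0) (R s0) = (\<Sum>a\<le>K. \<Sum>b\<le>K.
      dp a * coeff (R s0) b * mu (a+b+m) s0 + coeff (P s0) a * dr b * mu (a+b+m) s0
      - coeff (P s0) a * coeff (R s0) b * mu (a+b+m+2) s0)"
    unfolding ipm_expand[OF s0' degD dR] ipm_expand[OF s0' dP degD] ipm_expand[OF s0' dP dR]
    by (simp add: coeffD sum.distrib sum_subtractf add.assoc)
  then have Gd': "(G has_real_derivative (ipm m s0 (\<Sum>a\<le>K. monom (dp a) a) (R s0) + ipm m s0 (P s0) (\<Sum>a\<le>K. monom (dr a) a)
       - ipm (m+2) s0 (P s0) (R s0))) (at s0)" using Gd by simp
  show ?thesis
  proof (rule has_field_derivative_transform_within_open[OF Gd' open_I s0])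
    fix s assume "s \<in> I"
    then show "G s = ipm m s (P s) (R s)" unfolding G_def using ipm_expand[OF _ dP dR] I_slo by force
  qed
qed

end


lemma deglt_monoms: "deglt (\<Sum>a\<le>K. monom (c a) a) n \<longleftrightarrow> (\<forall>a. n \<le> a \<and> a \<le> K \<longrightarrow> c a = 0)"
  unfolding deglt_def by (auto simp: coeff_sum coeff_monom)

lemma poly_X2: "poly (X2 p) x = x\<^sup>2 * poly p x"
  unfolding X2_def by (simp add: power2_eq_square)

context setting begin

definition "Qs s n = OPr (ipm 0 s) n"
definition "hs s n = hB (ipm 0 s) n"
definition "dQ K s n = (\<Sum>a\<le>K. monom (deriv (\<lambda>r. coeff (Qs r n) a) s) a)"

lemma Qs_degree: "degree (Qs s n) = n" unfolding Qs_def by (rule OPr_degree)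

lemma ipm_shift2: "ipm (m+2) s p q = ipm m s (X2 p) q"
  unfolding ipm_def poly_X2 by (intro Bochner_Integration.integral_cong) (auto simp: power_add power2_eq_square algebra_simps)

lemma ipm_differentiable:
  assumes s0: "s0 \<in> I"
    and dP: "\<And>s. degree (P s) \<le> K" and dR: "\<And>s. degree (R s) \<le> K"
    and cP: "\<And>a. a \<le> K \<Longrightarrow> (\<lambda>s. coeff (P s) a) differentiable (at s0)"
    and cR: "\<And>a. a \<le> K \<Longrightarrow> (\<lambda>s. coeff (R s) a) differentiable (at s0)"
  shows "(\<lambda>s. ipm m s (P s) (R s)) differentiable (at s0)"
proof -
  have cP': "((\<lambda>s. coeff (P s) a) has_real_derivative deriv (\<lambda>s. coeff (P s) a) s0) (at s0)" if "a \<le> K" for a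
    using cP[OF that] DERIV_deriv_iff_real_differentiable by blast
  have cR': "((\<lambda>s. coeff (R s) a) has_real_derivative deriv (\<lambda>s. coeff (R s) a) s0) (at s0)" if "a \<le> K" for a
    using cR[OF that] DERIV_deriv_iff_real_differentiable by blast
  show ?thesis
    using ipm_deriv[OF s0 dP dR cP' cR', of m] unfolding real_differentiable_def by blast
qed

lemma hs_pos: "s \<in> I \<Longrightarrow> hs s n > 0"
  unfolding hs_def using opform.h_pos[OF opform_ipm] I_slo by (simp add: less_imp_le)

lemma Qs_diff: "s0 \<in> I \<Longrightarrow> (\<lambda>s. coeff (Qs s n) a) differentiable (at s0)"
proof (induction n arbitrary: a rule: less_induct)
  case (less n)
  note s0 = less.prems
  show ?case
  proof (cases n)
    case 0
    then show ?thesis unfolding Qs_def by simp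
  next
    case (Suc m)
    have IHm: "(\<lambda>s. coeff (Qs s m) a') differentiable (at s0)" for a' using less.IH[of m a'] Suc s0 by simp
    have px: "(\<lambda>s. coeff (pCons 0 (Qs s m)) a') differentiable (at s0)" for a'
      by (cases a') (simp_all add: IHm)
    have dpx: "degree (pCons 0 (Qs s m)) \<le> Suc m" for s using Qs_degree[of s m]
      by (metis degree_pCons_le)
    have dq: "degree (Qs s m) \<le> Suc m" for s using Qs_degree[of s m] by simp
    have hsd: "(\<lambda>s. hs s j) differentiable (at s0)" if "j \<le> m" for j
    proof -
      have "(\<lambda>s. ipm 0 s (Qs s j) (Qs s j)) differentiable (at s0)"
        using that by (intro ipm_differentiable[OF s0, of _ j]) (auto simp: Qs_degree Suc s0 intro!: less.IH)
      then show ?thesis unfolding hs_def hB_def Qs_def .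
    qed
    have bd: "(\<lambda>s. bB (ipm 0 s) m) differentiable (at s0)"
    proof -
      have "(\<lambda>s. ipm 0 s (pCons 0 (Qs s m)) (Qs s m)) differentiable (at s0)"
        by (rule ipm_differentiable[OF s0 dpx dq]) (auto simp: px IHm)
      moreover have "hs s0 m \<noteq> 0" using hs_pos[OF s0] by (simp add: less_imp_neq[symmetric])
      ultimately have "(\<lambda>s. ipm 0 s (pCons 0 (Qs s m)) (Qs s m) / hs s m) differentiable (at s0)"
        using hsd[of m] by (intro differentiable_divide) auto
      then show ?thesis unfolding bB_def hs_def Qs_def .
    qed
    have cd: "(\<lambda>s. cB (ipm 0 s) m) differentiable (at s0)"
    proof (cases m)
      case 0 then show ?thesis unfolding cB_def by simp
    next
      case (Suc j)
      have "hs s0 j \<noteq> 0" using hs_pos[OF s0] by (simp add: less_imp_neq[symmetric])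
      then have "(\<lambda>s. hs s m / hs s j) differentiable (at s0)"
        using hsd[of m] hsd[of j] Suc by (intro differentiable_divide) auto
      then show ?thesis unfolding cB_def hs_def using Suc by simp
    qed
    have rd: "(\<lambda>s. coeff (if m = 0 then 0 else Qs s (m - 1)) a) differentiable (at s0)"
      using less.IH[of "m - 1" a] Suc s0 by (cases "m = 0") auto
    have eq: "coeff (Qs s n) a = coeff (pCons 0 (Qs s m)) a - bB (ipm 0 s) m * coeff (Qs s m) a
        - cB (ipm 0 s) m * coeff (if m = 0 then 0 else Qs s (m - 1)) a" for s
      unfolding Suc Qs_def by (subst OPr_Suc) (simp only: coeff_diff coeff_smult)
    show ?thesis unfolding eq using px IHm bd cd rd
      by (intro differentiable_diff differentiable_mult) auto
  qed
qed

lemma Qs_deriv: "s0 \<in> I \<Longrightarrow> ((\<lambda>s. coeff (Qs s n) a) has_real_derivative deriv (\<lambda>s. coeff (Qs s n) a) s0) (at s0)"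
  using Qs_diff DERIV_deriv_iff_real_differentiable by blast

lemma dQ_deglt: "deglt (dQ K s n) n"
proof -
  have "deriv (\<lambda>r. coeff (Qs r n) a) s = 0" if "n \<le> a" for a
  proof -
    have "(\<lambda>r. coeff (Qs r n) a) = (\<lambda>r. if a = n then 1 else 0)"
      using that OPr_monic OPr_high unfolding Qs_def by (auto simp: fun_eq_iff)
    then show ?thesis by simp
  qed
  then show ?thesis unfolding dQ_def deglt_monoms by auto
qed

lemma ipm_QQ_deriv:
  assumes s0: "s0 \<in> I" and "n \<le> K" and "k \<le> K"
  shows "((\<lambda>s. ipm m s (Qs s n) (Qs s k)) has_real_derivative
     (ipm m s0 (dQ K s0 n) (Qs s0 k) + ipm m s0 (Qs s0 n) (dQ K s0 k) - ipm (m+2) s0 (Qs s0 n) (Qs s0 k))) (at s0)"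
  unfolding dQ_def using assms
  by (intro ipm_deriv[OF s0] Qs_deriv) (auto simp: Qs_degree)

end


context setting begin

lemma opf: "s \<in> I \<Longrightarrow> opform (ipm 0 s)"
  using opform_ipm I_slo by (simp add: less_imp_le)

lemma ipm_sym: "ipm m s p q = ipm m s q p"
  unfolding ipm_def by (intro Bochner_Integration.integral_cong) (auto simp: algebra_simps)

lemma ipm2_X2: "ipm 2 s p q = ipm 0 s (X2 p) q"
  unfolding ipm_def poly_X2 by (intro Bochner_Integration.integral_cong) (auto simp: algebra_simps)

lemma ipm4_X2: "ipm 4 s p q = ipm 0 s (X2 p) (X2 q)"
  unfolding ipm_def poly_X2 by (intro Bochner_Integration.integral_cong) (auto simp: algebra_simps power2_eq_square
     power4_eq_xxxx)

lemma h_deriv: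
  assumes s: "s \<in> I"
  shows "((\<lambda>r. hs r n) has_real_derivative - ipm 2 s (Qs s n) (Qs s n)) (at s)"
proof -
  interpret O: opform "ipm 0 s" by (rule opf[OF s])
  have z1: "ipm 0 s (dQ n s n) (Qs s n) = 0" unfolding Qs_def by (rule O.orth_low[OF dQ_deglt])
  have z2: "ipm 0 s (Qs s n) (dQ n s n) = 0" unfolding Qs_def by (rule O.orth_low2[OF dQ_deglt])
  have "((\<lambda>r. ipm 0 r (Qs r n) (Qs r n)) has_real_derivative - ipm 2 s (Qs s n) (Qs s n)) (at s)"
    using ipm_QQ_deriv[OF s, where n=n and k=n and K=n and m=0] z1 z2 by (simp add: numeral_2_eq_2)
  then show ?thesis unfolding hs_def hB_def Qs_def .
qed

lemma orth_deriv:
  assumes s: "s \<in> I" and kn: "k < n"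
  shows "ipm 0 s (dQ n s n) (Qs s k) = ipm 2 s (Qs s n) (Qs s k)"
proof -
  interpret O: opform "ipm 0 s" by (rule opf[OF s])
  have D: "((\<lambda>r. ipm 0 r (Qs r n) (Qs r k)) has_real_derivative
     (ipm 0 s (dQ n s n) (Qs s k) + ipm 0 s (Qs s n) (dQ n s k) - ipm 2 s (Qs s n) (Qs s k))) (at s)"
    using ipm_QQ_deriv[OF s, where n=n and k=k and K=n and m=0] kn by (simp add: numeral_2_eq_2)
  have D0: "((\<lambda>r. ipm 0 r (Qs r n) (Qs r k)) has_real_derivative 0) (at s)"
  proof (rule has_field_derivative_transform_within_open[OF _ open_I s])
    show "((\<lambda>r. 0) has_real_derivative 0) (at s)" by simp
    fix r assume r: "r \<in> I"
    interpret R: opform "ipm 0 r" by (rule opf[OF r])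
    show "0 = ipm 0 r (Qs r n) (Qs r k)" unfolding Qs_def using R.orth[OF kn] by simp
  qed
  have z: "ipm 0 s (Qs s n) (dQ n s k) = 0"
    unfolding Qs_def using kn by (intro O.orth_low2 O.deglt_mono[OF dQ_deglt]) simp
  show ?thesis using DERIV_unique[OF D D0] z by simp
qed

lemma cc_eq: "s \<in> I \<Longrightarrow> opform.cc (ipm 0 s) n k = ipm 2 s (Qs s n) (Qs s k)"
  using ipm2_X2[of s "Qs s n" "Qs s k"] unfolding opform.cc_def[OF opf] Qs_def by simp

lemma A_deriv:
  assumes s: "s \<in> I"
  shows "((\<lambda>r. ipm 2 r (Qs r n) (Qs r n)) has_real_derivative
     2 * (\<Sum>k<n. (opform.cc (ipm 0 s) n k)\<^sup>2 / hs s k)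
       - (\<Sum>k<n+3. (opform.cc (ipm 0 s) n k)\<^sup>2 / hs s k)) (at s)"
proof -
  interpret O: opform "ipm 0 s" by (rule opf[OF s])
  have D: "((\<lambda>r. ipm 2 r (Qs r n) (Qs r n)) has_real_derivative
     (ipm 2 s (dQ n s n) (Qs s n) + ipm 2 s (Qs s n) (dQ n s n) - ipm 4 s (Qs s n) (Qs s n))) (at s)"
    using ipm_QQ_deriv[OF s, where n=n and k=n and K=n and m=2] by simp
  have e1: "ipm 2 s (dQ n s n) (Qs s n) = (\<Sum>k<n. (O.cc n k)\<^sup>2 / hs s k)"
  proof -
    have "ipm 2 s (dQ n s n) (Qs s n) = ipm 0 s (dQ n s n) (X2 (Qs s n))"
      using ipm2_X2[of s "dQ n s n" "Qs s n"] ipm_sym X2_def O.B_shift by metis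
    also have "\<dots> = (\<Sum>k<n. ipm 0 s (dQ n s n) (Qs s k) * ipm 0 s (X2 (Qs s n)) (Qs s k) / hs s k)"
      unfolding Qs_def hs_def by (rule O.parseval[OF dQ_deglt])
    also have "\<dots> = (\<Sum>k<n. (O.cc n k)\<^sup>2 / hs s k)"
    proof (rule sum.cong)
      fix k assume "k \<in> {..<n}"
      then have "ipm 0 s (dQ n s n) (Qs s k) = O.cc n k" using orth_deriv[OF s, of k n] cc_eq[OF s] by simp
      moreover have "ipm 0 s (X2 (Qs s n)) (Qs s k) = O.cc n k" unfolding O.cc_def Qs_def ..
      ultimately show "ipm 0 s (dQ n s n) (Qs s k) * ipm 0 s (X2 (Qs s n)) (Qs s k) / hs s k = (O.cc n k)\<^sup>2 / hs s k"
        by (simp add: power2_eq_square)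
    qed simp
    finally show ?thesis .
  qed
  have e2: "ipm 4 s (Qs s n) (Qs s n) = (\<Sum>k<n+3. (O.cc n k)\<^sup>2 / hs s k)"
  proof -
    have "ipm 4 s (Qs s n) (Qs s n) = ipm 0 s (X2 (Qs s n)) (X2 (Qs s n))"
      by (rule ipm4_X2)
    also have "\<dots> = (\<Sum>k<n+3. ipm 0 s (X2 (Qs s n)) (Qs s k) * ipm 0 s (X2 (Qs s n)) (Qs s k) / hs s k)"
    proof -
      have "deglt (X2 (Qs s n)) (n+3)"
        unfolding Qs_def using O.deglt_X2[OF O.deglt_Q[THEN iffD2, of n "Suc n"]] by (simp add: numeral_3_eq_3)
      then show ?thesis unfolding Qs_def hs_def by (rule O.parseval)
    qed
    also have "\<dots> = (\<Sum>k<n+3. (O.cc n k)\<^sup>2 / hs s k)"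
      unfolding O.cc_def Qs_def by (simp add: power2_eq_square)
    finally show ?thesis .
  qed
  have "ipm 2 s (Qs s n) (dQ n s n) = ipm 2 s (dQ n s n) (Qs s n)" by (rule ipm_sym)
  then show ?thesis using D e1 e2 by simp
qed

lemma G_deriv:
  "((\<lambda>s. \<Sum>n<N. - ipm 2 s (Qs s n) (Qs s n) / hs s n) has_real_derivative
     (\<Sum>n<N. opform.LL (ipm 0 t0) n)) (at t0)"
proof -
  interpret O: opform "ipm 0 t0" by (rule opf[OF t0_I])
  show ?thesis
  proof (rule DERIV_sum)
    fix n assume "n \<in> {..<N}"
    have hp: "hs t0 n > 0" using hs_pos[OF t0_I] .
    have A: "ipm 2 t0 (Qs t0 n) (Qs t0 n) = O.cc n n" using cc_eq[OF t0_I] by simp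
    have D: "((\<lambda>s. - ipm 2 s (Qs s n) (Qs s n) / hs s n) has_real_derivative
       ((- (2 * (\<Sum>k<n. (O.cc n k)\<^sup>2 / hs t0 k) - (\<Sum>k<n+3. (O.cc n k)\<^sup>2 / hs t0 k))) * hs t0 n
         - (- ipm 2 t0 (Qs t0 n) (Qs t0 n)) * (- ipm 2 t0 (Qs t0 n) (Qs t0 n))) / (hs t0 n * hs t0 n)) (at t0)"
      using hp by (intro DERIV_divide DERIV_minus A_deriv[OF t0_I] h_deriv[OF t0_I]) auto
    have "((- (2 * (\<Sum>k<n. (O.cc n k)\<^sup>2 / hs t0 k) - (\<Sum>k<n+3. (O.cc n k)\<^sup>2 / hs t0 k))) * hs t0 n
         - (- ipm 2 t0 (Qs t0 n) (Qs t0 n)) * (- ipm 2 t0 (Qs t0 n) (Qs t0 n))) / (hs t0 n * hs t0 n)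
        = O.LL n"
      unfolding O.LL_def A using hp unfolding hs_def
      by (simp add: field_simps power2_eq_square)
    then show "((\<lambda>s. - ipm 2 s (Qs s n) (Qs s n) / hs s n) has_real_derivative O.LL n) (at t0)"
      using D by simp
  qed
qed

end


lemma sign_sq: "of_int (sign p * sign p) = (1::real)"
  unfolding sign_def by simp

lemma sign_sq2: "real_of_int (sign p) * real_of_int (sign p) = 1"
  unfolding sign_def by simp

context setting begin

lemma exp_sum_W: "exp (- real N * (\<Sum>j<N. Vpot d (Vs s) (z j))) = (\<Prod>j<N. W s (z j))"
  unfolding W_def by (simp add: sum_distrib_left exp_sum)

lemma prod_orth:
  assumes s: "s \<in> I" and p: "p permutes {0..<N}" and q: "q permutes {0..<N}"
  shows "(\<Prod>j<N. ipm 0 s (Qs s (p j)) (Qs s (q j))) = (if p = q then (\<Prod>n<N. hs s n) else 0)"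
proof (cases "p = q")
  case True
  have "(\<Prod>j<N. ipm 0 s (Qs s (p j)) (Qs s (p j))) = (\<Prod>j\<in>{0..<N}. hs s (p j))"
    unfolding hs_def hB_def Qs_def by (simp add: atLeast0LessThan)
  also have "\<dots> = (\<Prod>n\<in>{0..<N}. hs s n)"
    using prod.permute[OF p, of "hs s"] by (simp add: comp_def)
  finally show ?thesis using True by (simp add: atLeast0LessThan)
next
  case False
  interpret O: opform "ipm 0 s" by (rule opf[OF s])
  obtain j where j: "p j \<noteq> q j" using False by auto
  have "j < N"
  proof (rule ccontr)
    assume "\<not> j < N"
    then have "p j = j" "q j = j" using permutes_not_in[OF p] permutes_not_in[OF q] by auto
    then show False using j by simp
  qed
  have "ipm 0 s (Qs s (p j)) (Qs s (q j)) = 0"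
    unfolding Qs_def using j O.orth O.B_sym by (metis linorder_neqE_nat)
  then have "(\<Prod>j<N. ipm 0 s (Qs s (p j)) (Qs s (q j))) = 0"
    using \<open>j < N\<close> by (intro prod_zero) auto
  then show ?thesis using False by simp
qed

lemma heine:
  assumes s: "s \<in> I"
  shows "partition_Z d N (Vs s) = fact N * (\<Prod>n<N. hs s n)"
proof -
  interpret P: product_sigma_finite "\<lambda>_::nat. lborel :: real measure"
    unfolding product_sigma_finite_def by (simp add: sigma_finite_lborel)
  have s': "slo \<le> s" using I_slo[OF s] by simp
  define S where "S = {p. p permutes {0..<N}}"
  have finS: "finite S" unfolding S_def by (rule finite_permutations) simp
  define g where "g p q j x = poly (Qs s (p j)) x * poly (Qs s (q j)) x * W s x" for p q :: "nat \<Rightarrow> nat" and j x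
  have intg: "integrable lborel (g p q j)" for p q j
    unfolding g_def using int_ipm[OF s', of 0 "Qs s (p j)" "Qs s (q j)"] by simp
  have ig: "integral\<^sup>L lborel (g p q j) = ipm 0 s (Qs s (p j)) (Qs s (q j))" for p q j
    unfolding g_def ipm_def by simp
  have mon: "\<And>i. coeff (Qs s i) i = 1" unfolding Qs_def by (rule OPr_monic)
  have hi: "\<And>i a. a > i \<Longrightarrow> coeff (Qs s i) a = 0" unfolding Qs_def by (rule OPr_high)
  have integrand: "(\<Prod>j<N. \<Prod>k\<in>{Suc j..<N}. (z j - z k)\<^sup>2) * exp (- real N * (\<Sum>j<N. Vpot d (Vs s) (z j)))
      = (\<Sum>p\<in>S. \<Sum>q\<in>S. of_int (sign p * sign q) * (\<Prod>j\<in>{..<N}. g p q j (z j)))" for z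
  proof -
    have V: "(\<Prod>j<N. \<Prod>k\<in>{Suc j..<N}. (z j - z k)\<^sup>2) = (\<Sum>p | p permutes {0..<N}. \<Sum>q | q permutes {0..<N}. of_int (sign p * sign q) *
          (\<Prod>j<N. poly (Qs s (p j)) (z j) * poly (Qs s (q j)) (z j)))"
      by (rule vdm_sq[OF mon hi])
    show ?thesis unfolding V exp_sum_W g_def S_def
      by (simp add: sum_distrib_right prod.distrib mult.assoc)
  qed
  have "partition_Z d N (Vs s) = (\<integral>z. (\<Sum>p\<in>S. \<Sum>q\<in>S. of_int (sign p * sign q) * (\<Prod>j\<in>{..<N}. g p q j (z j)))
       \<partial>PiM {..<N} (\<lambda>_. lborel))"
    unfolding partition_Z_def integrand ..
  also have "\<dots> = (\<Sum>p\<in>S. \<Sum>q\<in>S. of_int (sign p * sign q) * (\<Prod>j\<in>{..<N}. ipm 0 s (Qs s (p j)) (Qs s (q j))))"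
  proof -
    have pint: "integrable (PiM {..<N} (\<lambda>_. lborel)) (\<lambda>z. \<Prod>j\<in>{..<N}. g p q j (z j))" for p q
      by (rule P.product_integrable_prod) (auto simp: intg)
    have pval: "(\<integral>z. (\<Prod>j\<in>{..<N}. g p q j (z j)) \<partial>PiM {..<N} (\<lambda>_. lborel)) = (\<Prod>j\<in>{..<N}. ipm 0 s (Qs s (p j)) (Qs s (q j)))" for p q
      by (subst P.product_integral_prod) (auto simp: intg ig)
    show ?thesis
      using pint pval
      by (simp add: Bochner_Integration.integral_sum Bochner_Integration.integrable_sum
          Bochner_Integration.integrable_mult_right)
  qed
  also have "\<dots> = (\<Sum>p\<in>S. \<Sum>q\<in>S. (if p = q then (\<Prod>n<N. hs s n) else 0))"
  proof (intro sum.cong refl)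
    fix p q assume p: "p \<in> S" and q: "q \<in> S"
    show "of_int (sign p * sign q) * (\<Prod>j\<in>{..<N}. ipm 0 s (Qs s (p j)) (Qs s (q j))) = (if p = q then (\<Prod>n<N. hs s n) else 0)"
      using prod_orth[OF s, of p q] p q sign_sq2[of p] unfolding S_def by auto
  qed
  also have "\<dots> = (\<Sum>p\<in>S. (\<Prod>n<N. hs s n))"
    using finS by (simp add: sum.delta)
  also have "\<dots> = fact N * (\<Prod>n<N. hs s n)"
    using card_permutations[of "{0..<N}" N] unfolding S_def by simp
  finally show ?thesis .
qed

end


lemma X_mult: "[:0, 1:] * p = pCons 0 (p :: real poly)"
  by (simp add: mult_pCons_left)

lemma deglt_poly:
  assumes "deglt q n"
  shows "poly q x = (\<Sum>k<n. coeff q k * x ^ k)"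
proof (cases "q = 0")
  case True then show ?thesis by simp
next
  case False
  then have "coeff q (degree q) \<noteq> 0" by simp
  then have dq: "degree q < n" using assms unfolding deglt_def by (meson not_le)
  have "poly q x = (\<Sum>i\<le>degree q. coeff q i * x ^ i)" by (rule poly_altdef)
  also have "\<dots> = (\<Sum>k<n. coeff q k * x ^ k)" using dq
    by (intro sum.mono_neutral_left) (auto simp: coeff_eq_0)
  finally show ?thesis .
qed

context setting begin

lemma F_eq:
  assumes s: "s \<in> I"
  shows "ln (partition_Z d N (Vs s)) = ln (fact N) + (\<Sum>n<N. ln (hs s n))"
proof -
  have P: "(\<Prod>n<N. hs s n) > 0" using hs_pos[OF s] by (simp add: prod_pos)
  have "ln (fact N * (\<Prod>n<N. hs s n)) = ln (fact N) + ln (\<Prod>n<N. hs s n)"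
    using P by (intro ln_mult_pos) auto
  also have "ln (\<Prod>n<N. hs s n) = (\<Sum>n<N. ln (hs s n))"
    using hs_pos[OF s] by (intro ln_prod) (auto simp: less_imp_neq[symmetric])
  finally show ?thesis unfolding heine[OF s] .
qed

lemma F_deriv:
  assumes s: "s \<in> I"
  shows "((\<lambda>t. ln (partition_Z d N (Vs t))) has_real_derivative
      (\<Sum>n<N. - ipm 2 s (Qs s n) (Qs s n) / hs s n)) (at s)"
proof -
  have D: "((\<lambda>t. ln (fact N) + (\<Sum>n<N. ln (hs t n))) has_real_derivative
      (0 + (\<Sum>n<N. inverse (hs s n) * (- ipm 2 s (Qs s n) (Qs s n))))) (at s)"
  proof (intro DERIV_add DERIV_const DERIV_sum)
    fix n assume "n \<in> {..<N}"
    show "((\<lambda>t. ln (hs t n)) has_real_derivative inverse (hs s n) * (- ipm 2 s (Qs s n) (Qs s n))) (at s)"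
      by (rule DERIV_chain2[OF DERIV_ln h_deriv[OF s]]) (rule hs_pos[OF s])
  qed
  have D': "((\<lambda>t. ln (fact N) + (\<Sum>n<N. ln (hs t n))) has_real_derivative
      (\<Sum>n<N. - ipm 2 s (Qs s n) (Qs s n) / hs s n)) (at s)"
    using D by (simp add: field_simps)
  show ?thesis
  proof (rule has_field_derivative_transform_within_open[OF D' open_I s])
    fix t assume "t \<in> I"
    then show "ln (fact N) + (\<Sum>n<N. ln (hs t n)) = ln (partition_Z d N (Vs t))" using F_eq by simp
  qed
qed

lemma W_t0: "opweight d N v = W t0"
  unfolding opweight_def W_def Vs_t0 by (rule refl)

lemma t0_slo: "slo \<le> t0" using I_slo[OF t0_I] by simp

lemma is_monic_Q: "is_monic_OP (W t0) n (Qs t0 n)"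
proof -
  interpret O: opform "ipm 0 t0" by (rule opf[OF t0_I])
  have "integrable lborel (\<lambda>x. poly (Qs t0 n) x * x ^ k * W t0 x) \<and>
      integral\<^sup>L lborel (\<lambda>x. poly (Qs t0 n) x * x ^ k * W t0 x) = 0" if k: "k < n" for k
  proof
    have e: "poly (Qs t0 n) x * x ^ k * W t0 x = poly (Qs t0 n * monom 1 k) x * W t0 x" for x
      by (simp add: poly_monom)
    show "integrable lborel (\<lambda>x. poly (Qs t0 n) x * x ^ k * W t0 x)"
      unfolding e by (rule int_poly[OF t0_slo])
    have "integral\<^sup>L lborel (\<lambda>x. poly (Qs t0 n) x * x ^ k * W t0 x) = ipm 0 t0 (Qs t0 n) (monom 1 k)"
      unfolding ipm_def by (intro Bochner_Integration.integral_cong) (auto simp: poly_monom)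
    also have "\<dots> = 0" unfolding Qs_def
      by (rule O.orth_low2) (use k in \<open>auto simp: deglt_def coeff_monom\<close>)
    finally show "integral\<^sup>L lborel (\<lambda>x. poly (Qs t0 n) x * x ^ k * W t0 x) = 0" .
  qed
  moreover have "degree (Qs t0 n) = n" by (rule Qs_degree)
  moreover have "lead_coeff (Qs t0 n) = 1" unfolding Qs_degree unfolding Qs_def by (rule OPr_monic)
  ultimately show ?thesis unfolding is_monic_OP_def by blast
qed

lemma is_monic_unique:
  assumes p: "is_monic_OP (W t0) n p"
  shows "p = Qs t0 n"
proof -
  interpret O: opform "ipm 0 t0" by (rule opf[OF t0_I])
  have pd: "degree p = n" and pl: "lead_coeff p = 1" using p unfolding is_monic_OP_def by auto
  have pk: "integrable lborel (\<lambda>x. poly p x * x ^ k * W t0 x) \<and> integral\<^sup>L lborel (\<lambda>x. poly p x * x ^ k * W t0 x) = 0"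
    if "k < n" for k using p that unfolding is_monic_OP_def by auto
  have Bp: "ipm 0 t0 p q = 0" if q: "deglt q n" for q
  proof -
    have "ipm 0 t0 p q = (\<integral>x. (\<Sum>k<n. coeff q k * (poly p x * x ^ k * W t0 x)) \<partial>lborel)"
      unfolding ipm_def deglt_poly[OF q]
      by (intro Bochner_Integration.integral_cong) (auto simp: sum_distrib_left sum_distrib_right algebra_simps)
    also have "\<dots> = (\<Sum>k<n. coeff q k * (\<integral>x. poly p x * x ^ k * W t0 x \<partial>lborel))"
      using pk by (simp add: Bochner_Integration.integral_sum Bochner_Integration.integrable_mult_right)
    also have "\<dots> = 0" using pk by simp
    finally show ?thesis .
  qed
  define r where "r = p - Qs t0 n"
  have rd: "deglt r n" unfolding deglt_def r_def
  proof (intro allI impI)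
    fix a assume "n \<le> a"
    show "coeff (p - Qs t0 n) a = 0"
    proof (cases "a = n")
      case True
      then show ?thesis using pl pd OPr_monic[of "ipm 0 t0" n] unfolding Qs_def by simp
    next
      case False
      then have "a > n" using \<open>n \<le> a\<close> by simp
      then show ?thesis using pd OPr_high[of n a "ipm 0 t0"] unfolding Qs_def by (simp add: coeff_eq_0)
    qed
  qed
  have "ipm 0 t0 r r = ipm 0 t0 p r - ipm 0 t0 (Qs t0 n) r" unfolding r_def by (rule O.B_diff)
  also have "\<dots> = 0" using Bp[OF rd] O.orth_low2[OF rd] unfolding Qs_def by simp
  finally have "r = 0" using O.B_pos by fastforce
  then show ?thesis unfolding r_def by simp
qed

lemma mOP_eq: "mOP (W t0) n = Qs t0 n"
  unfolding mOP_def using is_monic_Q is_monic_unique by (rule the_equality)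

lemma hnorm_eq: "hnorm (W t0) n = hs t0 n"
  unfolding hnorm_def mOP_eq hs_def hB_def ipm_def Qs_def
  by (intro Bochner_Integration.integral_cong) (auto simp: power2_eq_square)

lemma gamma_eq: "(rc_gamma (W t0) n)\<^sup>2 = cB (ipm 0 t0) n"
proof (cases "n = 0")
  case True then show ?thesis unfolding rc_gamma_def cB_def by simp
next
  case False
  have "hs t0 n / hs t0 (n - 1) \<ge> 0" using hs_pos[OF t0_I, of n] hs_pos[OF t0_I, of "n-1"] by simp
  then show ?thesis using False unfolding rc_gamma_def cB_def hnorm_eq hs_def by simp
qed

lemma beta_eq: "rc_beta (W t0) n = bB (ipm 0 t0) n"
proof -
  interpret O: opform "ipm 0 t0" by (rule opf[OF t0_I])
  show ?thesis unfolding rc_beta_def mOP_eq X_mult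
  proof (rule the_equality)
    show "\<exists>c. pCons 0 (Qs t0 n) = Qs t0 (Suc n) + Polynomial.smult (bB (ipm 0 t0) n) (Qs t0 n)
        + Polynomial.smult c (if n = 0 then 0 else Qs t0 (n - 1))"
      unfolding Qs_def using O.xrec[of n] by blast
    fix b' assume "\<exists>c. pCons 0 (Qs t0 n) = Qs t0 (Suc n) + Polynomial.smult b' (Qs t0 n) + Polynomial.smult c (if n = 0 then 0 else Qs t0 (n - 1))"
    then obtain c' where e: "pCons 0 (Qs t0 n) = Qs t0 (Suc n) + Polynomial.smult b' (Qs t0 n) + Polynomial.smult c' (if n = 0 then 0 else Qs t0 (n - 1))"
      by blast
    have z1: "ipm 0 t0 (Qs t0 (Suc n)) (Qs t0 n) = 0" unfolding Qs_def by (rule O.orth) simp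
    have z2: "ipm 0 t0 (if n = 0 then 0 else Qs t0 (n - 1)) (Qs t0 n) = 0"
    proof (cases "n = 0")
      case False
      then have "ipm 0 t0 (Qs t0 (n - 1)) (Qs t0 n) = 0"
      proof -
        have "ipm 0 t0 (Qs t0 n) (Qs t0 (n - 1)) = 0" unfolding Qs_def using False by (intro O.orth) simp
        then show ?thesis using O.B_sym by metis
      qed
      then show ?thesis using False by simp
    qed simp
    have "ipm 0 t0 (pCons 0 (Qs t0 n)) (Qs t0 n) = b' * hs t0 n"
      unfolding e using z1 z2 by (simp add: O.B_add O.B_smult hs_def hB_def Qs_def)
    then show "b' = bB (ipm 0 t0) n" unfolding bB_def using hs_pos[OF t0_I, of n]
      unfolding hs_def Qs_def by (simp add: field_simps)
  qed
qed

end

theorem proposition2p2: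
  fixes d N :: nat and v :: "nat \<Rightarrow> real"
  assumes "d \<ge> 1" and "N \<ge> 1" and "v (2 * d) > 0"
  defines "w \<equiv> opweight d N v"
    and "F \<equiv> (\<lambda>t::real. ln (partition_Z d N (v(2 := t / real N))))"
  shows "(\<exists>e>0. \<forall>t. \<bar>t - real N * v 2\<bar> < e \<longrightarrow> F differentiable (at t))
     \<and> (deriv F has_real_derivative
          (rc_gamma w N)\<^sup>2 * ((rc_gamma w (N - 1))\<^sup>2 + (rc_gamma w (N + 1))\<^sup>2
            + (rc_beta w N)\<^sup>2 + 2 * rc_beta w N * rc_beta w (N - 1)
            + (rc_beta w (N - 1))\<^sup>2)) (at (real N * v 2))"
proof -
  interpret S: setting d N v using assms(1-3) by unfold_locales
  interpret O: opform "S.ipm 0 S.t0" by (rule S.opf[OF S.t0_I])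
  have Fv: "F = (\<lambda>t. ln (partition_Z d N (S.Vs t)))" unfolding F_def S.Vs_def ..
  have w: "w = S.W S.t0" unfolding w_def by (rule S.W_t0)
  have t0: "real N * v 2 = S.t0" unfolding S.t0_def ..
  have inI: "t \<in> S.I" if "\<bar>t - S.t0\<bar> < S.del" for t
    using that unfolding S.I_def S.slo_def by auto
  have part1: "\<exists>e>0. \<forall>t. \<bar>t - real N * v 2\<bar> < e \<longrightarrow> F differentiable (at t)"
  proof (intro exI conjI allI impI)
    show "S.del > 0" by (rule S.del_pos)
    fix t assume "\<bar>t - real N * v 2\<bar> < S.del"
    then have "t \<in> S.I" using inI t0 by simp
    then show "F differentiable (at t)" unfolding Fv real_differentiable_def using S.F_deriv by blast
  qed
  have dF: "deriv F t = (\<Sum>n<N. - S.ipm 2 t (S.Qs t n) (S.Qs t n) / S.hs t n)" if "t \<in> S.I" for t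
    unfolding Fv using S.F_deriv[OF that] by (rule DERIV_imp_deriv)
  have D: "(deriv F has_real_derivative (\<Sum>n<N. O.LL n)) (at S.t0)"
  proof (rule has_field_derivative_transform_within_open[OF S.G_deriv S.open_I S.t0_I])
    fix t assume "t \<in> S.I"
    then show "(\<Sum>n<N. - S.ipm 2 t (S.Qs t n) (S.Qs t n) / S.hs t n) = deriv F t" using dF by simp
  qed
  have val: "(\<Sum>n<N. O.LL n) = (rc_gamma w N)\<^sup>2 * ((rc_gamma w (N - 1))\<^sup>2 + (rc_gamma w (N + 1))\<^sup>2
            + (rc_beta w N)\<^sup>2 + 2 * rc_beta w N * rc_beta w (N - 1)
            + (rc_beta w (N - 1))\<^sup>2)"
    unfolding w S.gamma_eq S.beta_eq using O.final_value[OF assms(2)] by simp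
  show ?thesis using part1 D unfolding val t0 by simp
qed


end
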